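(* Let ${\tt G}$ be a digraph, $R$ a commutative unital ring and $A$ a unital associative $R$-algebra. Then the cochain complex $(C^*_\mu({\tt G};A,A),d^* )$ does not depend, up to isomorphism of cochain complexes, on the choice of the total order on $V({\tt G})$ used to define it.
   Context: A digraph ${\tt G}=(V,E)$ has finite $V$ and $E\subseteq(V\times V)\setminus\{(v,v)\}$. A multipath is a spanning subgraph (all vertices, subset of edges) each of whose components (of the underlying undirected graph) is an isolated vertex or a simple directed path. $P({\tt G})$ is the set of multipaths ordered by inclusion of edge sets; ${\tt H}\prec{\tt H}\cup e$ denotes adding one edge $e$. Given a total order on $V({\tt G})$, order the components $c_0<\dots<c_k$ of a multipath by minimal vertex and let $s,t$ be the indices of the components containing the source and target of $e$. $\mathcal F_{A,A}({\tt H})=A^{\otimes_R(k+1)}$; for ${\tt H}\prec{\tt H}\cup e$ the merged component is placed at position $\min(s,t)$ and the map replaces $a_s,a_t$ by $a_sa_t$ there. Sign $\sigma({\tt H},{\tt H}\cup e)=t+1$ if $t>s$, $=s$ if $s>t$ (mod 2). $C^n_\mu({\tt G};A,A)=\bigoplus_{{\tt H}\in P({\tt G}),\#E({\tt H})=n}\mathcal F_{A,A}({\tt H})$, $d=\sum_{{\tt H}\prec{\tt H}'}(-1)^{\sigma({\tt H},{\tt H}')}\mathcal F_{A,A}({\tt H}\prec{\tt H}')$. *)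

theory Defs
  imports Main
begin

definition digraph :: "'v set \<Rightarrow> ('v \<times> 'v) set \<Rightarrow> bool" where
  "digraph V E \<longleftrightarrow> finite V \<and> E \<subseteq> V \<times> V \<and> (\<forall>v. (v, v) \<notin> E)"

definition components :: "'v set \<Rightarrow> ('v \<times> 'v) set \<Rightarrow> 'v set set" where
  "components V H = (\<lambda>v. {w \<in> V. (v, w) \<in> (H \<union> H\<inverse>)\<^sup>*}) ` V"

text \<open>A multipath: every component is an isolated vertex (xs = [v]) or a simple directed path.\<close>
definition is_multipath :: "'v set \<Rightarrow> ('v \<times> 'v) set \<Rightarrow> ('v \<times> 'v) set \<Rightarrow> bool" where
  "is_multipath V E H \<longleftrightarrow> H \<subseteq> E \<and>
     (\<forall>C \<in> components V H. \<exists>xs. distinct xs \<and> set xs = C \<and>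
        {e \<in> H. fst e \<in> C} = set (zip xs (tl xs)))"

definition minv :: "('v \<times> 'v) set \<Rightarrow> 'v set \<Rightarrow> 'v" where
  "minv le C = (THE w. w \<in> C \<and> (\<forall>u \<in> C. (w, u) \<in> le))"

definition comp_list :: "('v \<times> 'v) set \<Rightarrow> 'v set \<Rightarrow> ('v \<times> 'v) set \<Rightarrow> 'v set list" where
  "comp_list le V H = (THE cs. set cs = components V H \<and> distinct cs \<and>
       sorted_wrt (\<lambda>C D. (minv le C, minv le D) \<in> le) cs)"

definition comp_idx :: "('v \<times> 'v) set \<Rightarrow> 'v set \<Rightarrow> ('v \<times> 'v) set \<Rightarrow> 'v \<Rightarrow> nat" where
  "comp_idx le V H v = (THE i. i < length (comp_list le V H) \<and> v \<in> comp_list le V H ! i)"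

definition merge_list :: "nat \<Rightarrow> nat \<Rightarrow> 'a::times list \<Rightarrow> 'a list" where
  "merge_list s t xs = (let m = min s t; M = max s t; ys = xs[m := xs ! s * xs ! t]
                        in take M ys @ drop (Suc M) ys)"

definition sigma :: "nat \<Rightarrow> nat \<Rightarrow> nat" where
  "sigma s t = (if t > s then t + 1 else s)"

definition edge_map :: "('v \<times> 'v) set \<Rightarrow> 'v set \<Rightarrow> ('v \<times> 'v) set \<Rightarrow> 'v \<times> 'v \<Rightarrow> 'a::times list \<Rightarrow> 'a list" where
  "edge_map le V H e as = merge_list (comp_idx le V H (fst e)) (comp_idx le V H (snd e)) as"

definition edge_sign :: "('v \<times> 'v) set \<Rightarrow> 'v set \<Rightarrow> ('v \<times> 'v) set \<Rightarrow> 'v \<times> 'v \<Rightarrow> 'r::{comm_ring,monoid_mult}" where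
  "edge_sign le V H e = (- 1) ^ sigma (comp_idx le V H (fst e)) (comp_idx le V H (snd e))"

definition is_algebra :: "('r::{comm_ring,monoid_mult} \<Rightarrow> 'a::{ring,monoid_mult} \<Rightarrow> 'a) \<Rightarrow> bool" where
  "is_algebra sm \<longleftrightarrow>
     (\<forall>r a b. sm r (a + b) = sm r a + sm r b) \<and>
     (\<forall>r s a. sm (r + s) a = sm r a + sm s a) \<and>
     (\<forall>r s a. sm (r * s) a = sm r (sm s a)) \<and>
     (\<forall>a. sm 1 a = a) \<and>
     (\<forall>r a b. sm r (a * b) = sm r a * b \<and> sm r (a * b) = a * sm r b)"

text \<open>Generators of degree n: a multipath H with n edges and a list (a_0,...,a_k) with
  k+1 = number of components of H.  The free R-module on these generators is modelled by
  finitely supported functions; the tensor power is its quotient by multilinearity relations.\<close>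

definition gen_ok :: "'v set \<Rightarrow> ('v \<times> 'v) set \<Rightarrow> nat \<Rightarrow> ('v \<times> 'v) set \<times> 'a list \<Rightarrow> bool" where
  "gen_ok V E n x \<longleftrightarrow> is_multipath V E (fst x) \<and> card (fst x) = n \<and>
      length (snd x) = card (components V (fst x))"

definition Fr :: "'v set \<Rightarrow> ('v \<times> 'v) set \<Rightarrow> nat \<Rightarrow>
    (('v \<times> 'v) set \<times> 'a list \<Rightarrow> 'r::{comm_ring,monoid_mult}) set" where
  "Fr V E n = {f. finite {x. f x \<noteq> 0} \<and> (\<forall>x. f x \<noteq> 0 \<longrightarrow> gen_ok V E n x)}"

definition delta :: "'x \<Rightarrow> 'x \<Rightarrow> 'r::{comm_ring,monoid_mult}" where
  "delta x = (\<lambda>y. if y = x then 1 else 0)"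

inductive_set Nrel :: "('r::{comm_ring,monoid_mult} \<Rightarrow> 'a::{ring,monoid_mult} \<Rightarrow> 'a) \<Rightarrow> 'v set \<Rightarrow>
    ('v \<times> 'v) set \<Rightarrow> nat \<Rightarrow> (('v \<times> 'v) set \<times> 'a list \<Rightarrow> 'r) set"
  for sm V E n where
  gen_add: "gen_ok V E n (H, as) \<Longrightarrow> i < length as \<Longrightarrow>
     (\<lambda>y. delta (H, as[i := a + b]) y - delta (H, as[i := a]) y - delta (H, as[i := b]) y)
       \<in> Nrel sm V E n"
| gen_smult: "gen_ok V E n (H, as) \<Longrightarrow> i < length as \<Longrightarrow>
     (\<lambda>y. delta (H, as[i := sm r a]) y - r * delta (H, as[i := a]) y) \<in> Nrel sm V E n"
| zero: "(\<lambda>y. 0) \<in> Nrel sm V E n"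
| add: "f \<in> Nrel sm V E n \<Longrightarrow> g \<in> Nrel sm V E n \<Longrightarrow> (\<lambda>y. f y + g y) \<in> Nrel sm V E n"
| smult: "f \<in> Nrel sm V E n \<Longrightarrow> (\<lambda>y. r * f y) \<in> Nrel sm V E n"

definition dfree :: "('v \<times> 'v) set \<Rightarrow> 'v set \<Rightarrow> ('v \<times> 'v) set \<Rightarrow>
    (('v \<times> 'v) set \<times> 'a::{ring,monoid_mult} list \<Rightarrow> 'r::{comm_ring,monoid_mult}) \<Rightarrow>
    (('v \<times> 'v) set \<times> 'a list \<Rightarrow> 'r)" where
  "dfree le V E f = (\<lambda>(H', bs).
     \<Sum>(H, as, e) \<in> {(H, as, e). f (H, as) \<noteq> 0 \<and> e \<in> E \<and> e \<notin> H \<and>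
                         is_multipath V E (insert e H) \<and> H' = insert e H \<and>
                         bs = edge_map le V H e as}.
        edge_sign le V H e * f (H, as))"

definition cls :: "('r::{comm_ring,monoid_mult} \<Rightarrow> 'a::{ring,monoid_mult} \<Rightarrow> 'a) \<Rightarrow> 'v set \<Rightarrow>
    ('v \<times> 'v) set \<Rightarrow> nat \<Rightarrow> (('v \<times> 'v) set \<times> 'a list \<Rightarrow> 'r) \<Rightarrow> (('v \<times> 'v) set \<times> 'a list \<Rightarrow> 'r) set" where
  "cls sm V E n f = {g \<in> Fr V E n. (\<lambda>y. f y - g y) \<in> Nrel sm V E n}"

text \<open>C^n = carrier of degree-n cochains (set of cosets).\<close>
definition Cq :: "('r::{comm_ring,monoid_mult} \<Rightarrow> 'a::{ring,monoid_mult} \<Rightarrow> 'a) \<Rightarrow> 'v set \<Rightarrow>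
    ('v \<times> 'v) set \<Rightarrow> nat \<Rightarrow> (('v \<times> 'v) set \<times> 'a list \<Rightarrow> 'r) set set" where
  "Cq sm V E n = cls sm V E n ` Fr V E n"

definition rep :: "'x set \<Rightarrow> 'x" where
  "rep X = (SOME f. f \<in> X)"

definition qadd where
  "qadd sm V E n X Y = cls sm V E n (\<lambda>y. rep X y + rep Y y)"

definition qsmult where
  "qsmult sm V E n r X = cls sm V E n (\<lambda>y. r * rep X y)"

definition qd where
  "qd sm le V E n X = cls sm V E (Suc n) (dfree le V E (rep X))"

definition cochain_iso ::
  "('r::{comm_ring,monoid_mult} \<Rightarrow> 'a::{ring,monoid_mult} \<Rightarrow> 'a) \<Rightarrow> 'v set \<Rightarrow> ('v \<times> 'v) set \<Rightarrow>
   ('v \<times> 'v) set \<Rightarrow> ('v \<times> 'v) set \<Rightarrow> bool" where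
  "cochain_iso sm V E le1 le2 \<longleftrightarrow>
    (\<exists>\<phi>. \<forall>n. bij_betw (\<phi> n) (Cq sm V E n) (Cq sm V E n) \<and>
       (\<forall>X \<in> Cq sm V E n. \<forall>Y \<in> Cq sm V E n.
          \<phi> n (qadd sm V E n X Y) = qadd sm V E n (\<phi> n X) (\<phi> n Y)) \<and>
       (\<forall>r. \<forall>X \<in> Cq sm V E n. \<phi> n (qsmult sm V E n r X) = qsmult sm V E n r (\<phi> n X)) \<and>
       (\<forall>X \<in> Cq sm V E n. \<phi> (Suc n) (qd sm le1 V E n X) = qd sm le2 V E n (\<phi> n X)))"

end

theory Submission
  imports Defs
begin

definition pos :: "'x list \<Rightarrow> 'x \<Rightarrow> nat" where
  "pos xs x = (THE i. i < length xs \<and> xs ! i = x)"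

lemma pos_nth: "distinct xs \<Longrightarrow> i < length xs \<Longrightarrow> pos xs (xs!i) = i"
  unfolding pos_def by (rule the_equality) (auto simp: nth_eq_iff_index_eq)

lemma pos_in: "distinct xs \<Longrightarrow> x \<in> set xs \<Longrightarrow> pos xs x < length xs \<and> xs ! pos xs x = x"
  by (metis in_set_conv_nth pos_nth)

lemma ex_min:
  fixes r :: "'x \<Rightarrow> 'x \<Rightarrow> bool"
  assumes "finite S" "S \<noteq> {}" "\<forall>x\<in>S. \<forall>y\<in>S. x \<noteq> y \<longrightarrow> r x y \<or> r y x"
    "\<forall>x\<in>S. \<forall>y\<in>S. \<forall>z\<in>S. r x y \<longrightarrow> r y z \<longrightarrow> r x z"
  shows "\<exists>m\<in>S. \<forall>y\<in>S. y \<noteq> m \<longrightarrow> r m y"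
proof -
  have "S \<noteq> {} \<longrightarrow> (\<forall>x\<in>S. \<forall>y\<in>S. x \<noteq> y \<longrightarrow> r x y \<or> r y x) \<longrightarrow>
    (\<forall>x\<in>S. \<forall>y\<in>S. \<forall>z\<in>S. r x y \<longrightarrow> r y z \<longrightarrow> r x z) \<longrightarrow> (\<exists>m\<in>S. \<forall>y\<in>S. y \<noteq> m \<longrightarrow> r m y)"
    using assms(1)
  proof (induction S rule: finite_induct)
    case empty show ?case by simp
  next
    case (insert x F)
    show ?case
    proof (intro impI)
      assume t: "\<forall>a\<in>insert x F. \<forall>b\<in>insert x F. a \<noteq> b \<longrightarrow> r a b \<or> r b a"
        and tr: "\<forall>a\<in>insert x F. \<forall>b\<in>insert x F. \<forall>c\<in>insert x F. r a b \<longrightarrow> r b c \<longrightarrow> r a c"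
      show "\<exists>m\<in>insert x F. \<forall>y\<in>insert x F. y \<noteq> m \<longrightarrow> r m y"
      proof (cases "F = {}")
        case True thus ?thesis by auto
      next
        case False
        have t': "\<forall>a\<in>F. \<forall>b\<in>F. a \<noteq> b \<longrightarrow> r a b \<or> r b a" using t by blast
        have tr': "\<forall>a\<in>F. \<forall>b\<in>F. \<forall>c\<in>F. r a b \<longrightarrow> r b c \<longrightarrow> r a c" using tr by blast
        obtain m where m: "m \<in> F" "\<forall>y\<in>F. y \<noteq> m \<longrightarrow> r m y" using insert.IH False t' tr' by blast
        show ?thesis
        proof (cases "r x m")
          case True
          have "\<forall>y\<in>insert x F. y \<noteq> x \<longrightarrow> r x y"
          proof (intro ballI impI)
            fix y assume y: "y \<in> insert x F" "y \<noteq> x"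
            hence yF: "y \<in> F" by blast
            show "r x y"
            proof (cases "y = m")
              case True thus ?thesis using \<open>r x m\<close> by simp
            next
              case False
              hence "r m y" using m yF by blast
              thus ?thesis using tr \<open>r x m\<close> m(1) yF by blast
            qed
          qed
          thus ?thesis by blast
        next
          case False
          have "x \<noteq> m" using insert.hyps(2) m(1) by blast
          hence "r m x" using t m(1) False by blast
          thus ?thesis using m by blast
        qed
      qed
    qed
  qed
  thus ?thesis using assms by blast
qed

lemma ex_sorted:
  fixes r :: "'x \<Rightarrow> 'x \<Rightarrow> bool"
  assumes "finite S"
  shows "(\<forall>x\<in>S. \<forall>y\<in>S. x \<noteq> y \<longrightarrow> r x y \<or> r y x) \<longrightarrow>
    (\<forall>x\<in>S. \<forall>y\<in>S. \<forall>z\<in>S. r x y \<longrightarrow> r y z \<longrightarrow> r x z) \<longrightarrow>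
    (\<exists>xs. set xs = S \<and> distinct xs \<and> sorted_wrt r xs)"
  using assms
proof (induction S rule: finite_remove_induct)
  case empty show ?case by auto
next
  case (remove A)
  show ?case
  proof (intro impI)
    assume t: "\<forall>x\<in>A. \<forall>y\<in>A. x \<noteq> y \<longrightarrow> r x y \<or> r y x"
      and tr: "\<forall>x\<in>A. \<forall>y\<in>A. \<forall>z\<in>A. r x y \<longrightarrow> r y z \<longrightarrow> r x z"
    obtain m where m: "m \<in> A" "\<forall>y\<in>A. y \<noteq> m \<longrightarrow> r m y"
      using ex_min[OF remove.hyps(1,2) t tr] by blast
    have t': "\<forall>x\<in>A-{m}. \<forall>y\<in>A-{m}. x \<noteq> y \<longrightarrow> r x y \<or> r y x" using t by blast
    have tr': "\<forall>x\<in>A-{m}. \<forall>y\<in>A-{m}. \<forall>z\<in>A-{m}. r x y \<longrightarrow> r y z \<longrightarrow> r x z" using tr by blast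
    obtain xs where xs: "set xs = A - {m}" "distinct xs" "sorted_wrt r xs"
      using remove.IH[OF m(1)] t' tr' by blast
    have "set (m # xs) = A" using xs m by auto
    moreover have "distinct (m # xs)" using xs by auto
    moreover have "sorted_wrt r (m # xs)" using xs m by auto
    ultimately show "\<exists>xs. set xs = A \<and> distinct xs \<and> sorted_wrt r xs" by blast
  qed
qed

lemma sorted_unique:
  "sorted_wrt r xs \<Longrightarrow> sorted_wrt r ys \<Longrightarrow> distinct xs \<Longrightarrow> distinct ys \<Longrightarrow> set xs = set ys \<Longrightarrow>
   (\<forall>x\<in>set xs. \<forall>y\<in>set xs. r x y \<longrightarrow> r y x \<longrightarrow> x = y) \<Longrightarrow> xs = ys"
proof (induction xs arbitrary: ys)
  case Nil thus ?case by auto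
next
  case (Cons x xs)
  then obtain y ys' where ys: "ys = y # ys'" by (cases ys) auto
  show ?case
  proof (cases "x = y")
    case True
    have "set xs = set ys'" using Cons.prems ys True by auto
    thus ?thesis using Cons ys True by auto
  next
    case False
    have "x \<in> set ys'" "y \<in> set xs" using Cons.prems(5) ys False by auto
    hence "r y x" "r x y" using Cons.prems(1,2) ys by auto
    thus ?thesis using Cons.prems(6) False \<open>y \<in> set xs\<close> by auto
  qed
qed

lemma sorted_count:
  assumes "sorted_wrt r xs" "distinct xs" "\<forall>x\<in>set xs. \<forall>y\<in>set xs. r x y \<longrightarrow> r y x \<longrightarrow> x = y"
    "i < length xs"
  shows "card {y\<in>set xs. r y (xs!i) \<and> y \<noteq> xs!i} = i"
proof -
  have "{y\<in>set xs. r y (xs!i) \<and> y \<noteq> xs!i} = set (take i xs)"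
  proof (rule set_eqI, rule iffI)
    fix y assume y: "y \<in> {y\<in>set xs. r y (xs!i) \<and> y \<noteq> xs!i}"
    then obtain j where j: "j < length xs" "y = xs ! j" by (auto simp: in_set_conv_nth)
    have "j \<noteq> i" using y j by auto
    moreover have "\<not> i < j"
    proof
      assume "i < j"
      hence "r (xs!i) (xs!j)" using assms(1) j sorted_wrt_nth_less by blast
      hence "xs!i = xs!j" using assms(3) y j by (metis (no_types, lifting) assms(4) mem_Collect_eq nth_mem)
      thus False using \<open>i < j\<close> j assms(2,4) nth_eq_iff_index_eq by fastforce
    qed
    ultimately have "j < i" by auto
    thus "y \<in> set (take i xs)" using j by (auto simp: in_set_conv_nth)
  next
    fix y assume "y \<in> set (take i xs)"
    then obtain j where j: "j < i" "y = xs ! j" using assms(4) by (auto simp: in_set_conv_nth)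
    thus "y \<in> {y\<in>set xs. r y (xs!i) \<and> y \<noteq> xs!i}"
      using assms(1,2,4) sorted_wrt_nth_less[OF assms(1) j(1) assms(4)]
      by (auto simp: nth_eq_iff_index_eq)
  qed
  thus ?thesis using assms(2,4) by (simp add: distinct_card)
qed

lemma del_set:
  assumes "distinct ys" "M < length ys"
  shows "set (take M ys @ drop (Suc M) ys) = set ys - {ys!M}"
    and "distinct (take M ys @ drop (Suc M) ys)"
proof -
  have e: "ys = take M ys @ ys!M # drop (Suc M) ys" using assms(2) by (simp add: id_take_nth_drop)
  have d: "distinct (take M ys @ ys!M # drop (Suc M) ys)" using assms(1) e by simp
  show "set (take M ys @ drop (Suc M) ys) = set ys - {ys!M}"
    using d by (subst (3) e) auto
  show "distinct (take M ys @ drop (Suc M) ys)" using d by auto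
qed

lemma del_sorted:
  assumes "sorted_wrt r ys" "M < length ys"
  shows "sorted_wrt r (take M ys @ drop (Suc M) ys)"
proof -
  have e: "ys = take M ys @ ys!M # drop (Suc M) ys" using assms(2) by (simp add: id_take_nth_drop)
  have "sorted_wrt r (take M ys @ ys!M # drop (Suc M) ys)" using assms(1) e by simp
  thus ?thesis by (simp add: sorted_wrt_append)
qed

definition vcomp :: "'v set \<Rightarrow> ('v \<times> 'v) set \<Rightarrow> 'v \<Rightarrow> 'v set" where
  "vcomp V H v = {w \<in> V. (v, w) \<in> (H \<union> H\<inverse>)\<^sup>*}"

lemma components_comp: "components V H = vcomp V H ` V"
  unfolding components_def vcomp_def by simp

lemma rt_sym: "(v, w) \<in> (H \<union> H\<inverse>)\<^sup>* \<Longrightarrow> (w, v) \<in> (H \<union> H\<inverse>)\<^sup>*"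
proof -
  assume "(v, w) \<in> (H \<union> H\<inverse>)\<^sup>*"
  hence "(w, v) \<in> ((H \<union> H\<inverse>)\<inverse>)\<^sup>*" by (rule rtrancl_converseI)
  moreover have "(H \<union> H\<inverse>)\<inverse> = H \<union> H\<inverse>" by auto
  ultimately show ?thesis by simp
qed

lemma comp_refl: "v \<in> V \<Longrightarrow> v \<in> vcomp V H v"
  unfolding vcomp_def by simp

lemma comp_eq: "w \<in> vcomp V H v \<Longrightarrow> vcomp V H w = vcomp V H v"
proof -
  assume "w \<in> vcomp V H v"
  hence vw: "(v, w) \<in> (H \<union> H\<inverse>)\<^sup>*" unfolding vcomp_def by simp
  hence wv: "(w, v) \<in> (H \<union> H\<inverse>)\<^sup>*" by (rule rt_sym)
  show ?thesis unfolding vcomp_def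
    using rtrancl_trans[OF vw] rtrancl_trans[OF wv] by auto
qed

lemma comp_sub: "vcomp V H v \<subseteq> V" unfolding vcomp_def by auto

lemma in_comps: "C \<in> components V H \<Longrightarrow> v \<in> C \<Longrightarrow> C = vcomp V H v"
proof -
  assume "C \<in> components V H" "v \<in> C"
  then obtain w where "C = vcomp V H w" unfolding components_comp by blast
  thus ?thesis using comp_eq[of v V H w] \<open>v \<in> C\<close> by simp
qed

lemma comps_disj: "C \<in> components V H \<Longrightarrow> D \<in> components V H \<Longrightarrow> x \<in> C \<Longrightarrow> x \<in> D \<Longrightarrow> C = D"
proof -
  assume a: "C \<in> components V H" "D \<in> components V H" "x \<in> C" "x \<in> D"
  have "C = vcomp V H x" by (rule in_comps[OF a(1,3)])
  moreover have "D = vcomp V H x" by (rule in_comps[OF a(2,4)])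
  ultimately show "C = D" by simp
qed

lemma comps_ne: "C \<in> components V H \<Longrightarrow> C \<noteq> {}"
proof -
  assume "C \<in> components V H"
  then obtain w where "w \<in> V" "C = vcomp V H w" unfolding components_comp by blast
  thus ?thesis using comp_refl[of w V H] by auto
qed

lemma comps_sub: "C \<in> components V H \<Longrightarrow> C \<subseteq> V"
proof -
  assume "C \<in> components V H"
  then obtain w where "C = vcomp V H w" unfolding components_comp by blast
  thus ?thesis using comp_sub[of V H w] by simp
qed

lemma comp_in: "v \<in> V \<Longrightarrow> vcomp V H v \<in> components V H"
  unfolding components_comp by blast

lemma finite_comps: "finite V \<Longrightarrow> finite (components V H)"
  unfolding components_comp by simp

lemma rt_insert:
  "(x, y) \<in> (insert (a, b) H \<union> (insert (a, b) H)\<inverse>)\<^sup>* \<longleftrightarrow>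
   (x, y) \<in> (H \<union> H\<inverse>)\<^sup>* \<or> ((x, a) \<in> (H \<union> H\<inverse>)\<^sup>* \<and> (b, y) \<in> (H \<union> H\<inverse>)\<^sup>*) \<or>
   ((x, b) \<in> (H \<union> H\<inverse>)\<^sup>* \<and> (a, y) \<in> (H \<union> H\<inverse>)\<^sup>*)"
  (is "?L \<longleftrightarrow> ?R")
proof
  assume ?L
  thus ?R
  proof (induction rule: rtrancl_induct)
    case base thus ?case by simp
  next
    case (step y z)
    from step.hyps(2) have "(y, z) \<in> H \<union> H\<inverse> \<or> (y, z) = (a, b) \<or> (y, z) = (b, a)" by auto
    thus ?case
    proof (elim disjE)
      assume "(y, z) \<in> H \<union> H\<inverse>"
      thus ?case using step.IH by (meson rtrancl.rtrancl_into_rtrancl)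
    next
      assume "(y, z) = (a, b)"
      thus ?case using step.IH by auto
    next
      assume "(y, z) = (b, a)"
      thus ?case using step.IH by auto
    qed
  qed
next
  assume ?R
  have sub: "(H \<union> H\<inverse>)\<^sup>* \<subseteq> (insert (a, b) H \<union> (insert (a, b) H)\<inverse>)\<^sup>*"
    by (rule rtrancl_mono) auto
  have ab: "(a, b) \<in> (insert (a, b) H \<union> (insert (a, b) H)\<inverse>)\<^sup>*"
       "(b, a) \<in> (insert (a, b) H \<union> (insert (a, b) H)\<inverse>)\<^sup>*" by auto
  from \<open>?R\<close> show ?L using sub ab by (meson rtrancl_trans subsetD)
qed

lemma comp_insert:
  assumes "a \<in> V" "b \<in> V" "v \<in> V"
  shows "vcomp V (insert (a, b) H) v =
    (if vcomp V H v = vcomp V H a \<or> vcomp V H v = vcomp V H b then vcomp V H a \<union> vcomp V H b else vcomp V H v)"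
proof -
  let ?R = "(H \<union> H\<inverse>)\<^sup>*"
  have gen: "vcomp V H v = vcomp V H x \<longleftrightarrow> (v, x) \<in> ?R" if x: "x \<in> V" for x
  proof
    assume "vcomp V H v = vcomp V H x"
    hence "x \<in> vcomp V H v" using comp_refl[OF x, of H] by simp
    thus "(v, x) \<in> ?R" unfolding vcomp_def by simp
  next
    assume "(v, x) \<in> ?R"
    hence "x \<in> vcomp V H v" using x unfolding vcomp_def by simp
    thus "vcomp V H v = vcomp V H x" using comp_eq[of x V H v] by simp
  qed
  have ca: "vcomp V H v = vcomp V H a \<longleftrightarrow> (v, a) \<in> ?R" by (rule gen[OF assms(1)])
  have cb: "vcomp V H v = vcomp V H b \<longleftrightarrow> (v, b) \<in> ?R" by (rule gen[OF assms(2)])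
  show ?thesis
  proof (cases "(v, a) \<in> ?R \<or> (v, b) \<in> ?R")
    case True
    have "vcomp V (insert (a, b) H) v = vcomp V H a \<union> vcomp V H b"
    proof (cases "(v, a) \<in> ?R")
      case True
      have e: "(v, w) \<in> ?R \<longleftrightarrow> (a, w) \<in> ?R" for w
        using True rt_sym[OF True] rtrancl_trans[of v a] rtrancl_trans[of a v] by blast
      show ?thesis unfolding vcomp_def rt_insert using e True by auto
    next
      case False
      hence T: "(v, b) \<in> ?R" using True by blast
      have e: "(v, w) \<in> ?R \<longleftrightarrow> (b, w) \<in> ?R" for w
        using T rt_sym[OF T] rtrancl_trans[of v b] rtrancl_trans[of b v] by blast
      show ?thesis unfolding vcomp_def rt_insert using e T False by auto
    qed
    thus ?thesis using True ca cb by simp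
  next
    case False
    have nv: "vcomp V H v \<noteq> vcomp V H a" "vcomp V H v \<noteq> vcomp V H b" using False ca cb by simp_all
    have "vcomp V (insert (a, b) H) v = vcomp V H v"
      unfolding vcomp_def rt_insert using False by auto
    thus ?thesis using nv by simp
  qed
qed

lemma comps_insert:
  assumes "a \<in> V" "b \<in> V"
  shows "components V (insert (a, b) H) =
    insert (vcomp V H a \<union> vcomp V H b) (components V H - {vcomp V H a, vcomp V H b})"
proof -
  have "components V (insert (a, b) H) = (\<lambda>v. if vcomp V H v = vcomp V H a \<or> vcomp V H v = vcomp V H b
      then vcomp V H a \<union> vcomp V H b else vcomp V H v) ` V"
    unfolding components_comp using comp_insert[OF assms] by (intro image_cong) auto
  also have "\<dots> = insert (vcomp V H a \<union> vcomp V H b) (components V H - {vcomp V H a, vcomp V H b})"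
    unfolding components_comp using assms by auto
  finally show ?thesis .
qed

lemma mp_count:
  assumes "is_multipath V E H" "C \<in> components V H"
  shows "card {e \<in> H. fst e \<in> C} = card C - 1"
proof -
  obtain xs where xs: "distinct xs" "set xs = C" "{e \<in> H. fst e \<in> C} = set (zip xs (tl xs))"
    using assms unfolding is_multipath_def by blast
  have "card (set (zip xs (tl xs))) = length (zip xs (tl xs))"
    by (rule distinct_card[OF distinct_zipI1[OF xs(1)]])
  hence "card (set (zip xs (tl xs))) = length xs - 1" by simp
  moreover have "card C = length xs" using xs(1,2) distinct_card by blast
  ultimately show ?thesis using xs(3) by simp
qed

lemma comps_distinct:
  assumes "finite V" "H \<subseteq> V \<times> V" "a \<in> V" "b \<in> V" "(a, b) \<notin> H"
    "is_multipath V E H" "is_multipath V E (insert (a, b) H)"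
  shows "vcomp V H a \<noteq> vcomp V H b"
proof
  assume eq: "vcomp V H a = vcomp V H b"
  let ?C = "vcomp V H a"
  have C': "?C \<in> components V (insert (a, b) H)" using comps_insert[OF assms(3,4)] eq by auto
  have C: "?C \<in> components V H" using comp_in[OF assms(3)] .
  have fH: "finite H" using assms(1,2) finite_subset by blast
  have "{e \<in> insert (a, b) H. fst e \<in> ?C} = insert (a, b) {e \<in> H. fst e \<in> ?C}"
    using comp_refl[OF assms(3)] by auto
  hence "card {e \<in> insert (a, b) H. fst e \<in> ?C} = Suc (card {e \<in> H. fst e \<in> ?C})"
    using fH assms(5) by simp
  moreover have "card ?C \<ge> 1"
    using comp_refl[OF assms(3)] finite_subset[OF comp_sub assms(1)]
    by (metis One_nat_def Suc_leI card_gt_0_iff empty_iff)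
  ultimately show False using mp_count[OF assms(6) C] mp_count[OF assms(7) C'] by simp
qed

lemma lo_props:
  assumes "linear_order_on V le"
  shows "\<forall>x\<in>V. (x, x) \<in> le" "\<And>x y z. (x, y) \<in> le \<Longrightarrow> (y, z) \<in> le \<Longrightarrow> (x, z) \<in> le"
    "\<And>x y. (x, y) \<in> le \<Longrightarrow> (y, x) \<in> le \<Longrightarrow> x = y"
    "\<And>x y. x \<in> V \<Longrightarrow> y \<in> V \<Longrightarrow> x \<noteq> y \<Longrightarrow> (x, y) \<in> le \<or> (y, x) \<in> le"
  using assms unfolding linear_order_on_def partial_order_on_def preorder_on_def refl_on_def
    total_on_def antisym_on_def trans_on_def by blast+

lemma minv_unique:
  assumes "linear_order_on V le" "w \<in> C" "\<forall>u\<in>C. (w, u) \<in> le"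
  shows "minv le C = w"
  unfolding minv_def
proof (rule the_equality)
  show "w \<in> C \<and> (\<forall>u\<in>C. (w, u) \<in> le)" using assms by blast
  fix x assume "x \<in> C \<and> (\<forall>u\<in>C. (x, u) \<in> le)"
  thus "x = w" using assms(2,3) lo_props(3)[OF assms(1)] by blast
qed

lemma minv_prop:
  assumes "linear_order_on V le" "finite C" "C \<noteq> {}" "C \<subseteq> V"
  shows "minv le C \<in> C" "\<forall>u\<in>C. (minv le C, u) \<in> le"
proof -
  have t: "\<forall>x\<in>C. \<forall>y\<in>C. x \<noteq> y \<longrightarrow> (x, y) \<in> le \<or> (y, x) \<in> le"
    using lo_props(4)[OF assms(1)] assms(4) by blast
  have tr: "\<forall>x\<in>C. \<forall>y\<in>C. \<forall>z\<in>C. (x, y) \<in> le \<longrightarrow> (y, z) \<in> le \<longrightarrow> (x, z) \<in> le"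
    using lo_props(2)[OF assms(1)] by blast
  obtain m where m: "m \<in> C" "\<forall>y\<in>C. y \<noteq> m \<longrightarrow> (m, y) \<in> le"
    using ex_min[of C "\<lambda>x y. (x, y) \<in> le", OF assms(2,3) t tr] by blast
  have m2: "\<forall>u\<in>C. (m, u) \<in> le" using m lo_props(1)[OF assms(1)] assms(4) by (metis subsetD)
  have "minv le C = m" by (rule minv_unique[OF assms(1) m(1) m2])
  thus "minv le C \<in> C" "\<forall>u\<in>C. (minv le C, u) \<in> le" using m(1) m2 by simp_all
qed

definition ordc :: "('v \<times> 'v) set \<Rightarrow> 'v set \<Rightarrow> 'v set \<Rightarrow> bool" where
  "ordc le C D \<longleftrightarrow> (minv le C, minv le D) \<in> le"

definition ltc :: "('v \<times> 'v) set \<Rightarrow> 'v set \<Rightarrow> 'v set \<Rightarrow> bool" where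
  "ltc le C D \<longleftrightarrow> ordc le C D \<and> C \<noteq> D"

lemma comp_minv:
  assumes "finite V" "linear_order_on V le" "C \<in> components V H"
  shows "minv le C \<in> C" "\<forall>u\<in>C. (minv le C, u) \<in> le" "minv le C \<in> V"
proof -
  have f: "finite C" using finite_subset[OF comps_sub[OF assms(3)] assms(1)] .
  show "minv le C \<in> C" "\<forall>u\<in>C. (minv le C, u) \<in> le"
    using minv_prop[OF assms(2) f comps_ne[OF assms(3)] comps_sub[OF assms(3)]] by simp_all
  thus "minv le C \<in> V" using comps_sub[OF assms(3)] by blast
qed

lemma ordc_antisym:
  assumes "finite V" "linear_order_on V le" "C \<in> components V H" "D \<in> components V H"
    "ordc le C D" "ordc le D C"
  shows "C = D"
proof -
  have "minv le C = minv le D" using assms(5,6) lo_props(3)[OF assms(2)] unfolding ordc_def by blast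
  thus ?thesis using comps_disj[OF assms(3,4)] comp_minv(1)[OF assms(1,2,3)] comp_minv(1)[OF assms(1,2,4)]
    by metis
qed

lemma ordc_total:
  assumes "finite V" "linear_order_on V le" "C \<in> components V H" "D \<in> components V H" "C \<noteq> D"
  shows "ordc le C D \<or> ordc le D C"
proof -
  have "minv le C \<noteq> minv le D"
    using comps_disj[OF assms(3,4)] comp_minv(1)[OF assms(1,2,3)] comp_minv(1)[OF assms(1,2,4)] assms(5)
    by metis
  thus ?thesis using lo_props(4)[OF assms(2) comp_minv(3)[OF assms(1,2,3)] comp_minv(3)[OF assms(1,2,4)]]
    unfolding ordc_def by blast
qed

lemma ordc_trans:
  assumes "linear_order_on V le" "ordc le C D" "ordc le D F"
  shows "ordc le C F"
  using assms lo_props(2)[OF assms(1)] unfolding ordc_def by blast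

lemma CL:
  assumes "finite V" "linear_order_on V le"
  shows "set (comp_list le V H) = components V H" "distinct (comp_list le V H)"
    "sorted_wrt (ordc le) (comp_list le V H)"
proof -
  let ?P = "\<lambda>cs. set cs = components V H \<and> distinct cs \<and> sorted_wrt (\<lambda>C D. (minv le C, minv le D) \<in> le) cs"
  have eqr: "(\<lambda>C D. (minv le C, minv le D) \<in> le) = ordc le" unfolding ordc_def by (intro ext) simp
  have t: "\<forall>x\<in>components V H. \<forall>y\<in>components V H. x \<noteq> y \<longrightarrow> ordc le x y \<or> ordc le y x"
    using ordc_total[OF assms] by blast
  have tr: "\<forall>x\<in>components V H. \<forall>y\<in>components V H. \<forall>z\<in>components V H. ordc le x y \<longrightarrow> ordc le y z \<longrightarrow> ordc le x z"
    using ordc_trans[OF assms(2)] by blast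
  obtain xs where xs: "set xs = components V H" "distinct xs" "sorted_wrt (ordc le) xs"
    using ex_sorted[OF finite_comps[OF assms(1), of H], where r = "ordc le"] t tr by blast
  have "?P xs" using xs eqr by simp
  moreover have "ys = xs" if "?P ys" for ys
  proof (rule sorted_unique[of "ordc le"])
    show "sorted_wrt (ordc le) ys" "distinct ys" "set ys = set xs" using that xs eqr by simp_all
    show "sorted_wrt (ordc le) xs" "distinct xs" using xs by simp_all
    show "\<forall>x\<in>set ys. \<forall>y\<in>set ys. ordc le x y \<longrightarrow> ordc le y x \<longrightarrow> x = y"
      using ordc_antisym[OF assms] that by blast
  qed
  ultimately have "comp_list le V H = xs" unfolding comp_list_def by (rule the_equality)
  thus "set (comp_list le V H) = components V H" "distinct (comp_list le V H)"
    "sorted_wrt (ordc le) (comp_list le V H)" using xs by simp_all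
qed

lemma comp_idx_pos:
  assumes "finite V" "linear_order_on V le" "v \<in> V"
  shows "comp_idx le V H v = pos (comp_list le V H) (vcomp V H v)"
proof -
  let ?L = "comp_list le V H"
  have inL: "vcomp V H v \<in> set ?L" using CL(1)[OF assms(1,2)] comp_in[OF assms(3)] by simp
  have p: "pos ?L (vcomp V H v) < length ?L \<and> ?L ! pos ?L (vcomp V H v) = vcomp V H v"
    using pos_in[OF CL(2)[OF assms(1,2)] inL] .
  show ?thesis unfolding comp_idx_def
  proof (rule the_equality)
    show "pos ?L (vcomp V H v) < length ?L \<and> v \<in> ?L ! pos ?L (vcomp V H v)"
      using p comp_refl[OF assms(3)] by simp
    fix i assume i: "i < length ?L \<and> v \<in> ?L ! i"
    hence "?L ! i \<in> components V H" using CL(1)[OF assms(1,2)] nth_mem by blast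
    hence "?L ! i = vcomp V H v" using in_comps[of "?L ! i" V H v] i by blast
    thus "i = pos ?L (vcomp V H v)" using pos_nth[OF CL(2)[OF assms(1,2)]] i by metis
  qed
qed

lemma pos_count:
  assumes "finite V" "linear_order_on V le" "C \<in> components V H"
  shows "pos (comp_list le V H) C = card {D \<in> components V H. ltc le D C}"
proof -
  let ?L = "comp_list le V H"
  have inL: "C \<in> set ?L" using CL(1)[OF assms(1,2)] assms(3) by simp
  have p: "pos ?L C < length ?L" "?L ! pos ?L C = C" using pos_in[OF CL(2)[OF assms(1,2)] inL] by simp_all
  have "card {y\<in>set ?L. ordc le y (?L ! pos ?L C) \<and> y \<noteq> ?L ! pos ?L C} = pos ?L C"
  proof (rule sorted_count[OF CL(3)[OF assms(1,2)] CL(2)[OF assms(1,2)] _ p(1)])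
    show "\<forall>x\<in>set ?L. \<forall>y\<in>set ?L. ordc le x y \<longrightarrow> ordc le y x \<longrightarrow> x = y"
      using ordc_antisym[OF assms(1,2)] CL(1)[OF assms(1,2)] by blast
  qed
  thus ?thesis using p(2) CL(1)[OF assms(1,2)] unfolding ltc_def by simp
qed

definition mrg :: "nat \<Rightarrow> nat \<Rightarrow> 'x \<Rightarrow> 'x list \<Rightarrow> 'x list" where
  "mrg s t u L = (let m = min s t; M = max s t; ys = L[m := u] in take M ys @ drop (Suc M) ys)"

lemma merge_list_mrg: "merge_list s t xs = mrg s t (xs ! s * xs ! t) xs"
  unfolding merge_list_def mrg_def by simp

lemma minv_union:
  assumes "finite V" "linear_order_on V le" "ca \<in> components V H" "cb \<in> components V H" "ordc le ca cb"
  shows "minv le (ca \<union> cb) = minv le ca"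
proof (rule minv_unique[OF assms(2)])
  show "minv le ca \<in> ca \<union> cb" using comp_minv(1)[OF assms(1,2,3)] by simp
  have "\<forall>u\<in>cb. (minv le ca, u) \<in> le"
    using assms(5) comp_minv(2)[OF assms(1,2,4)] lo_props(2)[OF assms(2)] unfolding ordc_def by blast
  thus "\<forall>u\<in>ca \<union> cb. (minv le ca, u) \<in> le" using comp_minv(2)[OF assms(1,2,3)] by blast
qed

locale step =
  fixes V :: "'v set" and E H :: "('v \<times> 'v) set" and a b :: 'v
  assumes fin: "finite V" and HV: "H \<subseteq> V \<times> V" and aV: "a \<in> V" and bV: "b \<in> V"
    and nH: "(a, b) \<notin> H" and mpH: "is_multipath V E H" and mpH': "is_multipath V E (insert (a, b) H)"
begin

abbreviation "ca \<equiv> vcomp V H a"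
abbreviation "cb \<equiv> vcomp V H b"
abbreviation "uu \<equiv> vcomp V H a \<union> vcomp V H b"

lemma ca_in: "ca \<in> components V H" using comp_in[OF aV] .
lemma cb_in: "cb \<in> components V H" using comp_in[OF bV] .
lemma ca_ne_cb: "ca \<noteq> cb" using comps_distinct[OF fin HV aV bV nH mpH mpH'] .
lemma comps': "components V (insert (a, b) H) = insert uu (components V H - {ca, cb})"
  using comps_insert[OF aV bV] .

lemma uu_notin: "uu \<notin> components V H"
proof
  assume u: "uu \<in> components V H"
  have "uu = ca" using in_comps[OF u, of a] comp_refl[OF aV, of H] by simp
  hence "b \<in> ca" using comp_refl[OF bV, of H] by blast
  hence "cb = ca" using comp_eq[of b V H a] by simp
  thus False using ca_ne_cb by simp
qed

context
  fixes le assumes lo: "linear_order_on V le"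
begin

abbreviation "L \<equiv> comp_list le V H"
abbreviation "s \<equiv> pos (comp_list le V H) ca"
abbreviation "t \<equiv> pos (comp_list le V H) cb"

lemma L_props: "set L = components V H" "distinct L" "sorted_wrt (ordc le) L"
  using CL[OF fin lo] by simp_all

lemma st: "s < length L" "L ! s = ca" "t < length L" "L ! t = cb" "s \<noteq> t"
proof -
  show "s < length L" "L ! s = ca" using pos_in[OF L_props(2)] L_props(1) ca_in by auto
  show "t < length L" "L ! t = cb" using pos_in[OF L_props(2)] L_props(1) cb_in by auto
  thus "s \<noteq> t" using \<open>L ! s = ca\<close> ca_ne_cb by auto
qed

lemma ord_st: "ordc le ca cb \<longleftrightarrow> s < t"
proof
  assume o: "ordc le ca cb"
  show "s < t"
  proof (rule ccontr)
    assume "\<not> s < t"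
    hence "t < s" using st(5) by simp
    hence "ordc le cb ca" using sorted_wrt_nth_less[OF L_props(3) _ st(1)] st by metis
    thus False using ordc_antisym[OF fin lo ca_in cb_in o] ca_ne_cb by simp
  qed
next
  assume "s < t"
  thus "ordc le ca cb" using sorted_wrt_nth_less[OF L_props(3) _ st(3)] st by metis
qed

abbreviation "mm \<equiv> min s t"
abbreviation "MM \<equiv> max s t"
abbreviation "ys \<equiv> L[mm := uu]"

lemma minv_uu: "minv le uu = minv le (L ! mm)"
proof (cases "s < t")
  case True
  hence "ordc le ca cb" using ord_st by simp
  thus ?thesis using minv_union[OF fin lo ca_in cb_in] True st by simp
next
  case False
  hence "t < s" using st(5) by simp
  hence "ordc le cb ca" using sorted_wrt_nth_less[OF L_props(3) _ st(1)] st by metis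
  hence "minv le (cb \<union> ca) = minv le cb" using minv_union[OF fin lo cb_in ca_in] by simp
  thus ?thesis using False st by (simp add: Un_commute)
qed

lemma ys_props: "sorted_wrt (ordc le) ys" "distinct ys" "set ys = insert uu (components V H - {L ! mm})"
  "length ys = length L" "ys ! MM = L ! MM" "MM < length ys"
proof -
  have mmL: "mm < length L" using st by simp
  have "map (minv le) ys = (map (minv le) L)[mm := minv le uu]" by (simp add: map_update)
  also have "\<dots> = map (minv le) L" using minv_uu mmL by (simp add: list_update_same_conv)
  finally have mp: "map (minv le) ys = map (minv le) L" .
  have so: "sorted_wrt (\<lambda>x y. (x, y) \<in> le) (map (minv le) L)"
    using L_props(3) unfolding sorted_wrt_map ordc_def by simp
  show "sorted_wrt (ordc le) ys" using so unfolding mp[symmetric] sorted_wrt_map ordc_def by simp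
  show "distinct ys" using distinct_list_update[OF L_props(2)] uu_notin L_props(1) by blast
  show "set ys = insert uu (components V H - {L ! mm})" using set_update_distinct[OF L_props(2) mmL] L_props(1) by simp
  show "length ys = length L" by simp
  show "ys ! MM = L ! MM" using st(5) by (simp add: nth_list_update)
  show "MM < length ys" using st by simp
qed

abbreviation "L' \<equiv> mrg s t uu L"

lemma L'_props: "sorted_wrt (ordc le) L'" "distinct L'" "set L' = components V (insert (a, b) H)"
  "length L' = length L - 1"
proof -
  have e: "L' = take MM ys @ drop (Suc MM) ys" unfolding mrg_def Let_def by simp
  show "sorted_wrt (ordc le) L'" unfolding e by (rule del_sorted[OF ys_props(1,6)])
  show "distinct L'" unfolding e by (rule del_set(2)[OF ys_props(2,6)])
  have "set L' = set ys - {ys ! MM}" unfolding e by (rule del_set(1)[OF ys_props(2,6)])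
  also have "\<dots> = insert uu (components V H - {L ! mm}) - {L ! MM}" using ys_props by simp
  also have "\<dots> = insert uu (components V H - {ca, cb})"
  proof -
    have "{L ! mm, L ! MM} = {ca, cb}" using st by (cases "s < t") auto
    moreover have "uu \<noteq> L ! MM" using uu_notin ca_in cb_in st by (cases "s < t") (auto simp: max_def)
    ultimately show ?thesis by blast
  qed
  finally show "set L' = components V (insert (a, b) H)" using comps' by simp
  show "length L' = length L - 1" unfolding e using ys_props(4,6) st by (auto simp: max_def)
qed

lemma CL': "comp_list le V (insert (a, b) H) = L'"
proof (rule sorted_unique[of "ordc le"])
  show "sorted_wrt (ordc le) (comp_list le V (insert (a, b) H))" using CL(3)[OF fin lo] .
  show "distinct (comp_list le V (insert (a, b) H))" using CL(2)[OF fin lo] .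
  show "sorted_wrt (ordc le) L'" "distinct L'" using L'_props by simp_all
  show "set (comp_list le V (insert (a, b) H)) = set L'" using L'_props CL(1)[OF fin lo] by simp
  show "\<forall>x\<in>set (comp_list le V (insert (a, b) H)). \<forall>y\<in>set (comp_list le V (insert (a, b) H)).
      ordc le x y \<longrightarrow> ordc le y x \<longrightarrow> x = y"
    using ordc_antisym[OF fin lo] CL(1)[OF fin lo] by blast
qed

lemma map_mrg: "mrg s t (g ca * g cb) (map g L) = map (g(uu := g ca * g cb)) L'"
proof -
  have m1: "map (g(uu := g ca * g cb)) L = map g L" using uu_notin L_props(1) by (intro map_cong) auto
  have "map (g(uu := g ca * g cb)) ys = (map (g(uu := g ca * g cb)) L)[mm := (g(uu := g ca * g cb)) uu]"
    by (rule map_update)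
  hence eq: "map (g(uu := g ca * g cb)) ys = (map g L)[mm := g ca * g cb]" unfolding m1 by simp
  show ?thesis unfolding mrg_def Let_def by (simp only: eq[symmetric] take_map drop_map map_append)
qed

lemma edge_map_eq:
  assumes "length xs = length L"
  shows "edge_map le V H (a, b) xs = map ((\<lambda>C. xs ! pos L C)(uu := xs ! s * xs ! t)) L'"
proof -
  have xs: "xs = map (\<lambda>C. xs ! pos L C) L"
    using assms pos_nth[OF L_props(2)] by (intro nth_equalityI) auto
  have ia: "comp_idx le V H a = s" "comp_idx le V H b = t"
    using comp_idx_pos[OF fin lo aV] comp_idx_pos[OF fin lo bV] by simp_all
  have "edge_map le V H (a, b) xs = mrg s t (xs ! s * xs ! t) xs"
    unfolding edge_map_def ia[unfolded fst_conv snd_conv] merge_list_mrg using ia by simp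
  also have "\<dots> = mrg s t ((\<lambda>C. xs ! pos L C) ca * (\<lambda>C. xs ! pos L C) cb) (map (\<lambda>C. xs ! pos L C) L)"
    using xs st by simp
  also have "\<dots> = map ((\<lambda>C. xs ! pos L C)(uu := xs ! s * xs ! t)) L'" by (rule map_mrg)
  finally show ?thesis .
qed

lemma edge_sign_eq: "edge_sign le V H (a, b) = (- 1) ^ sigma s t"
  unfolding edge_sign_def using comp_idx_pos[OF fin lo aV] comp_idx_pos[OF fin lo bV] by simp

end
end

definition invc :: "('x \<Rightarrow> 'x \<Rightarrow> bool) \<Rightarrow> ('x \<Rightarrow> 'x \<Rightarrow> bool) \<Rightarrow> 'x set \<Rightarrow> nat" where
  "invc l1 l2 S = (\<Sum>x\<in>S. \<Sum>y\<in>S. if l1 x y \<and> l2 y x then 1 else 0)"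

lemma card_filter_sum: "finite A \<Longrightarrow> card {x \<in> A. P x} = (\<Sum>x\<in>A. if P x then 1 else 0)"
  by (simp add: sum.If_cases Int_def)

lemma sig_par:
  fixes l :: "'x \<Rightarrow> 'x \<Rightarrow> bool"
  assumes fO: "finite Os" and pO: "p \<notin> Os" and qO: "q \<notin> Os" and pq: "p \<noteq> q"
    and irr: "\<not> l p p" "\<not> l q q"
    and tot: "l p q \<longleftrightarrow> \<not> l q p"
    and tr1: "\<And>x. x \<in> Os \<Longrightarrow> l x p \<Longrightarrow> l p q \<Longrightarrow> l x q"
    and tr2: "\<And>x. x \<in> Os \<Longrightarrow> l x q \<Longrightarrow> l q p \<Longrightarrow> l x p"
    and s: "s = card {x \<in> insert p (insert q Os). l x p}"
    and t: "t = card {x \<in> insert p (insert q Os). l x q}"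
  shows "even (sigma s t + card {x \<in> Os. l x p \<or> l x q} + (if l q p then 1 else 0))"
proof -
  have fA: "finite {x \<in> Os. l x p}" "finite {x \<in> Os. l x q}" using fO by simp_all
  have se: "s = card {x \<in> Os. l x p} + (if l q p then 1 else 0)"
  proof -
    have "{x \<in> insert p (insert q Os). l x p} = (if l q p then insert q {x \<in> Os. l x p} else {x \<in> Os. l x p})"
      using irr by auto
    thus ?thesis using s fA qO by simp
  qed
  have te: "t = card {x \<in> Os. l x q} + (if l p q then 1 else 0)"
  proof -
    have "{x \<in> insert p (insert q Os). l x q} = (if l p q then insert p {x \<in> Os. l x q} else {x \<in> Os. l x q})"
      using irr by auto
    thus ?thesis using t fA pO by simp
  qed
  show ?thesis
  proof (cases "l p q")
    case True
    hence nqp: "\<not> l q p" using tot by simp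
    have sub: "{x \<in> Os. l x p} \<subseteq> {x \<in> Os. l x q}" using tr1 True by blast
    have "card {x \<in> Os. l x p} \<le> card {x \<in> Os. l x q}" by (rule card_mono[OF fA(2) sub])
    hence "s < t" using se te True nqp by simp
    hence sg: "sigma s t = card {x \<in> Os. l x q} + 2" unfolding sigma_def using te True by simp
    have "{x \<in> Os. l x p \<or> l x q} = {x \<in> Os. l x q}" using sub by blast
    thus ?thesis using sg nqp by simp
  next
    case False
    hence qp: "l q p" using tot by simp
    have sub: "{x \<in> Os. l x q} \<subseteq> {x \<in> Os. l x p}" using tr2 qp by blast
    have "card {x \<in> Os. l x q} \<le> card {x \<in> Os. l x p}" by (rule card_mono[OF fA(1) sub])
    hence "\<not> s < t" using se te False qp by simp
    hence sg: "sigma s t = card {x \<in> Os. l x p} + 1" unfolding sigma_def using se qp by simp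
    have "{x \<in> Os. l x p \<or> l x q} = {x \<in> Os. l x p}" using sub by blast
    thus ?thesis using sg qp by simp
  qed
qed

lemma sign_abstract:
  fixes l1 l2 :: "'x \<Rightarrow> 'x \<Rightarrow> bool"
  assumes fO: "finite Os" and pO: "p \<notin> Os" and qO: "q \<notin> Os" and pq: "p \<noteq> q" and uO: "u \<notin> Os"
    and irr1: "\<And>x. \<not> l1 x x" and irr2: "\<And>x. \<not> l2 x x"
    and totpq1: "l1 p q \<longleftrightarrow> \<not> l1 q p" and totpq2: "l2 p q \<longleftrightarrow> \<not> l2 q p"
    and totp1: "\<And>x. x \<in> Os \<Longrightarrow> l1 p x \<longleftrightarrow> \<not> l1 x p" and totp2: "\<And>x. x \<in> Os \<Longrightarrow> l2 p x \<longleftrightarrow> \<not> l2 x p"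
    and totq1: "\<And>x. x \<in> Os \<Longrightarrow> l1 q x \<longleftrightarrow> \<not> l1 x q" and totq2: "\<And>x. x \<in> Os \<Longrightarrow> l2 q x \<longleftrightarrow> \<not> l2 x q"
    and xu1: "\<And>x. x \<in> Os \<Longrightarrow> l1 x u \<longleftrightarrow> l1 x p \<and> l1 x q"
    and xu2: "\<And>x. x \<in> Os \<Longrightarrow> l2 x u \<longleftrightarrow> l2 x p \<and> l2 x q"
    and ux1: "\<And>x. x \<in> Os \<Longrightarrow> l1 u x \<longleftrightarrow> \<not> l1 x u"
    and ux2: "\<And>x. x \<in> Os \<Longrightarrow> l2 u x \<longleftrightarrow> \<not> l2 x u"
    and tr1a: "\<And>x. x \<in> Os \<Longrightarrow> l1 x p \<Longrightarrow> l1 p q \<Longrightarrow> l1 x q"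
    and tr1b: "\<And>x. x \<in> Os \<Longrightarrow> l1 x q \<Longrightarrow> l1 q p \<Longrightarrow> l1 x p"
    and tr2a: "\<And>x. x \<in> Os \<Longrightarrow> l2 x p \<Longrightarrow> l2 p q \<Longrightarrow> l2 x q"
    and tr2b: "\<And>x. x \<in> Os \<Longrightarrow> l2 x q \<Longrightarrow> l2 q p \<Longrightarrow> l2 x p"
  shows "even (invc l1 l2 (insert p (insert q Os)) + sigma (card {x \<in> insert p (insert q Os). l1 x p})
                 (card {x \<in> insert p (insert q Os). l1 x q})
             + invc l1 l2 (insert u Os) + sigma (card {x \<in> insert p (insert q Os). l2 x p})
                 (card {x \<in> insert p (insert q Os). l2 x q}))"
proof -
  define I where "I x y = (if l1 x y \<and> l2 y x then 1 else 0 :: nat)" for x y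
  define ind where "ind b = (if b then 1 else 0 :: nat)" for b
  define \<sigma>1 where "\<sigma>1 = sigma (card {x \<in> insert p (insert q Os). l1 x p}) (card {x \<in> insert p (insert q Os). l1 x q})"
  define \<sigma>2 where "\<sigma>2 = sigma (card {x \<in> insert p (insert q Os). l2 x p}) (card {x \<in> insert p (insert q Os). l2 x q})"
  define C1 where "C1 = card {x \<in> Os. l1 x p \<or> l1 x q}"
  define C2 where "C2 = card {x \<in> Os. l2 x p \<or> l2 x q}"
  define G where "G x = I x p + I p x + I x q + I q x + I x u + I u x + ind (l1 x p \<or> l1 x q) + ind (l2 x p \<or> l2 x q)" for x
  define S0 where "S0 = (\<Sum>x\<in>Os. \<Sum>y\<in>Os. I x y)"
  have h2: "even (\<sigma>1 + C1 + ind (l1 q p))" unfolding \<sigma>1_def C1_def ind_def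
    by (rule sig_par[OF fO pO qO pq irr1 irr1 totpq1 tr1a tr1b refl refl])
  have h3: "even (\<sigma>2 + C2 + ind (l2 q p))" unfolding \<sigma>2_def C2_def ind_def
    by (rule sig_par[OF fO pO qO pq irr2 irr2 totpq2 tr2a tr2b refl refl])
  have h4: "even (sum G Os)"
  proof (rule dvd_sum)
    fix x assume x: "x \<in> Os"
    show "2 dvd G x" unfolding G_def I_def ind_def
      using totp1[OF x] totp2[OF x] totq1[OF x] totq2[OF x] xu1[OF x] xu2[OF x] ux1[OF x] ux2[OF x]
      by (cases "l1 x p"; cases "l1 x q"; cases "l2 x p"; cases "l2 x q") simp_all
  qed
  have h5: "even (I p q + I q p + ind (l1 q p) + ind (l2 q p))" unfolding I_def ind_def
    using totpq1 totpq2 by (cases "l1 p q"; cases "l2 p q") simp_all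
  have c1: "C1 = (\<Sum>x\<in>Os. ind (l1 x p \<or> l1 x q))" unfolding C1_def ind_def by (rule card_filter_sum[OF fO])
  have c2: "C2 = (\<Sum>x\<in>Os. ind (l2 x p \<or> l2 x q))" unfolding C2_def ind_def by (rule card_filter_sum[OF fO])
  have Ipp: "I p p = 0" "I q q = 0" "I u u = 0" unfolding I_def using irr1 by simp_all
  have pqO: "p \<notin> insert q Os" using pO pq by simp
  have i1: "invc l1 l2 (insert p (insert q Os)) = I p q + I q p + (\<Sum>y\<in>Os. I p y) + (\<Sum>y\<in>Os. I q y)
      + (\<Sum>x\<in>Os. I x p) + (\<Sum>x\<in>Os. I x q) + S0"
    unfolding invc_def I_def[symmetric] S0_def using fO pqO qO Ipp by (simp add: sum.distrib)
  have i2: "invc l1 l2 (insert u Os) = (\<Sum>y\<in>Os. I u y) + (\<Sum>x\<in>Os. I x u) + S0"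
    unfolding invc_def I_def[symmetric] S0_def using fO uO Ipp by (simp add: sum.distrib)
  have g: "sum G Os = (\<Sum>x\<in>Os. I x p) + (\<Sum>x\<in>Os. I p x) + (\<Sum>x\<in>Os. I x q) + (\<Sum>x\<in>Os. I q x)
      + (\<Sum>x\<in>Os. I x u) + (\<Sum>x\<in>Os. I u x) + C1 + C2"
    unfolding G_def c1 c2 by (simp add: sum.distrib)
  have "even (invc l1 l2 (insert p (insert q Os)) + \<sigma>1 + invc l1 l2 (insert u Os) + \<sigma>2)"
    using h2 h3 h4 h5 unfolding i1 i2 g by presburger
  thus ?thesis unfolding \<sigma>1_def \<sigma>2_def by simp
qed

definition eps :: "('v \<times> 'v) set \<Rightarrow> ('v \<times> 'v) set \<Rightarrow> 'v set \<Rightarrow> ('v \<times> 'v) set \<Rightarrow> 'r::{comm_ring,monoid_mult}" where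
  "eps le1 le2 V H = (- 1) ^ invc (ltc le1) (ltc le2) (components V H)"

lemma neg1_sq: "(- 1 :: 'r::{comm_ring,monoid_mult}) ^ (2 * k) = 1"
proof -
  have "(- 1 :: 'r) ^ 2 = 1" by (simp add: power2_eq_square)
  thus ?thesis by (simp add: power_mult)
qed

lemma neg1_even:
  assumes "even (m + n)" shows "(- 1 :: 'r::{comm_ring,monoid_mult}) ^ m = (- 1) ^ n"
proof (cases "m \<le> n")
  case True
  have "\<exists>k. n = m + 2 * k" using assms True by presburger
  then obtain k where "n = m + 2 * k" by blast
  thus ?thesis by (simp add: power_add neg1_sq)
next
  case False
  have "\<exists>k. m = n + 2 * k" using assms False by presburger
  then obtain k where "m = n + 2 * k" by blast
  thus ?thesis by (simp add: power_add neg1_sq)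
qed

lemma invc_swap: "invc l2 l1 S = invc l1 l2 S"
  unfolding invc_def by (subst sum.swap) (simp add: conj_commute)

lemma eps_inv: "eps le2 le1 V H * (eps le1 le2 V H :: 'r::{comm_ring,monoid_mult}) = 1"
  unfolding eps_def invc_swap[of "ltc le2"] by (simp add: power_add[symmetric] mult_2[symmetric] neg1_sq)

lemma ltc_tot:
  assumes "finite V" "linear_order_on V le" "C \<in> components V H" "D \<in> components V H" "C \<noteq> D"
  shows "ltc le C D \<longleftrightarrow> \<not> ltc le D C"
  using ordc_total[OF assms] ordc_antisym[OF assms(1-4)] assms(5) unfolding ltc_def by blast

context step begin

context fixes le assumes lo: "linear_order_on V le"
begin

lemma xu:
  assumes x: "x \<in> components V H - {ca, cb}"
  shows "ltc le x uu \<longleftrightarrow> ltc le x ca \<and> ltc le x cb"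
proof -
  have xC: "x \<in> components V H" using x by blast
  have xu: "x \<noteq> uu" using x uu_notin by blast
  show ?thesis
  proof (cases "ordc le ca cb")
    case True
    have m: "minv le uu = minv le ca" using minv_union[OF fin lo ca_in cb_in True] .
    have "ordc le x uu \<longleftrightarrow> ordc le x ca" unfolding ordc_def m ..
    moreover have "ordc le x ca \<Longrightarrow> ordc le x cb" using ordc_trans[OF lo _ True] .
    ultimately show ?thesis using x xu unfolding ltc_def by blast
  next
    case False
    hence T: "ordc le cb ca" using ordc_total[OF fin lo ca_in cb_in ca_ne_cb] by blast
    have m: "minv le uu = minv le cb" using minv_union[OF fin lo cb_in ca_in T] by (simp add: Un_commute)
    have "ordc le x uu \<longleftrightarrow> ordc le x cb" unfolding ordc_def m ..
    moreover have "ordc le x cb \<Longrightarrow> ordc le x ca" using ordc_trans[OF lo _ T] .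
    ultimately show ?thesis using x xu unfolding ltc_def by blast
  qed
qed

lemma ux:
  assumes x: "x \<in> components V H - {ca, cb}"
  shows "ltc le uu x \<longleftrightarrow> \<not> ltc le x uu"
proof -
  have "uu \<in> components V (insert (a, b) H)" "x \<in> components V (insert (a, b) H)" using comps' x by auto
  moreover have "uu \<noteq> x" using x uu_notin by blast
  ultimately show ?thesis using ltc_tot[OF fin lo] by blast
qed

lemma trx:
  assumes x: "x \<in> components V H - {ca, cb}" and "ltc le x p" "ltc le p q" "q \<in> {ca, cb}"
  shows "ltc le x q"
  using assms ordc_trans[OF lo] unfolding ltc_def by blast

lemma cnt: "card {x \<in> components V H. ltc le x ca} = s le" "card {x \<in> components V H. ltc le x cb} = t le"
  using pos_count[OF fin lo ca_in] pos_count[OF fin lo cb_in] by simp_all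

end

lemma sign_rel:
  assumes lo1: "linear_order_on V le1" and lo2: "linear_order_on V le2"
  shows "(eps le1 le2 V H :: 'r::{comm_ring,monoid_mult}) * edge_sign le2 V H (a, b) =
         eps le1 le2 V (insert (a, b) H) * edge_sign le1 V H (a, b)"
proof -
  let ?O = "components V H - {ca, cb}"
  have CS: "insert ca (insert cb ?O) = components V H" using ca_in cb_in by blast
  have CS': "insert uu ?O = components V (insert (a, b) H)" using comps' by simp
  have fO: "finite ?O" using finite_comps[OF fin] by simp
  have ev: "even (invc (ltc le1) (ltc le2) (insert ca (insert cb ?O))
      + sigma (card {x \<in> insert ca (insert cb ?O). ltc le1 x ca}) (card {x \<in> insert ca (insert cb ?O). ltc le1 x cb})
      + invc (ltc le1) (ltc le2) (insert uu ?O)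
      + sigma (card {x \<in> insert ca (insert cb ?O). ltc le2 x ca}) (card {x \<in> insert ca (insert cb ?O). ltc le2 x cb}))"
  proof (rule sign_abstract[OF fO])
    show "ca \<notin> ?O" "cb \<notin> ?O" "ca \<noteq> cb" "uu \<notin> ?O" using ca_ne_cb uu_notin by auto
    show "\<And>x. \<not> ltc le1 x x" "\<And>x. \<not> ltc le2 x x" unfolding ltc_def by simp_all
    show "ltc le1 ca cb \<longleftrightarrow> \<not> ltc le1 cb ca" using ltc_tot[OF fin lo1 ca_in cb_in ca_ne_cb] .
    show "ltc le2 ca cb \<longleftrightarrow> \<not> ltc le2 cb ca" using ltc_tot[OF fin lo2 ca_in cb_in ca_ne_cb] .
    show "\<And>x. x \<in> ?O \<Longrightarrow> ltc le1 ca x \<longleftrightarrow> \<not> ltc le1 x ca" using ltc_tot[OF fin lo1 ca_in] by blast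
    show "\<And>x. x \<in> ?O \<Longrightarrow> ltc le2 ca x \<longleftrightarrow> \<not> ltc le2 x ca" using ltc_tot[OF fin lo2 ca_in] by blast
    show "\<And>x. x \<in> ?O \<Longrightarrow> ltc le1 cb x \<longleftrightarrow> \<not> ltc le1 x cb" using ltc_tot[OF fin lo1 cb_in] by blast
    show "\<And>x. x \<in> ?O \<Longrightarrow> ltc le2 cb x \<longleftrightarrow> \<not> ltc le2 x cb" using ltc_tot[OF fin lo2 cb_in] by blast
    show "\<And>x. x \<in> ?O \<Longrightarrow> ltc le1 x uu \<longleftrightarrow> ltc le1 x ca \<and> ltc le1 x cb" using xu[OF lo1] by blast
    show "\<And>x. x \<in> ?O \<Longrightarrow> ltc le2 x uu \<longleftrightarrow> ltc le2 x ca \<and> ltc le2 x cb" using xu[OF lo2] by blast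
    show "\<And>x. x \<in> ?O \<Longrightarrow> ltc le1 uu x \<longleftrightarrow> \<not> ltc le1 x uu" using ux[OF lo1] by blast
    show "\<And>x. x \<in> ?O \<Longrightarrow> ltc le2 uu x \<longleftrightarrow> \<not> ltc le2 x uu" using ux[OF lo2] by blast
    show "\<And>x. x \<in> ?O \<Longrightarrow> ltc le1 x ca \<Longrightarrow> ltc le1 ca cb \<Longrightarrow> ltc le1 x cb" using trx[OF lo1] by blast
    show "\<And>x. x \<in> ?O \<Longrightarrow> ltc le1 x cb \<Longrightarrow> ltc le1 cb ca \<Longrightarrow> ltc le1 x ca" using trx[OF lo1] by blast
    show "\<And>x. x \<in> ?O \<Longrightarrow> ltc le2 x ca \<Longrightarrow> ltc le2 ca cb \<Longrightarrow> ltc le2 x cb" using trx[OF lo2] by blast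
    show "\<And>x. x \<in> ?O \<Longrightarrow> ltc le2 x cb \<Longrightarrow> ltc le2 cb ca \<Longrightarrow> ltc le2 x ca" using trx[OF lo2] by blast
  qed
  hence ev2: "even ((invc (ltc le1) (ltc le2) (components V H) + sigma (s le2) (t le2))
     + (invc (ltc le1) (ltc le2) (components V (insert (a, b) H)) + sigma (s le1) (t le1)))"
    unfolding CS CS' cnt[OF lo1] cnt[OF lo2] by (simp add: ac_simps)
  have "(eps le1 le2 V H :: 'r) * edge_sign le2 V H (a, b) =
        (- 1) ^ (invc (ltc le1) (ltc le2) (components V H) + sigma (s le2) (t le2))"
    unfolding eps_def edge_sign_eq[OF lo2] by (simp add: power_add)
  also have "\<dots> = (- 1) ^ (invc (ltc le1) (ltc le2) (components V (insert (a, b) H)) + sigma (s le1) (t le1))"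
    by (rule neg1_even[OF ev2])
  also have "\<dots> = eps le1 le2 V (insert (a, b) H) * edge_sign le1 V H (a, b)"
    unfolding eps_def edge_sign_eq[OF lo1] by (simp add: power_add)
  finally show ?thesis .
qed

end

definition perm :: "'x list \<Rightarrow> 'x list \<Rightarrow> 'a list \<Rightarrow> 'a list" where
  "perm la lb xs = map (\<lambda>C. xs ! pos la C) lb"

lemma perm_map:
  assumes d: "distinct la" and sub: "set lb \<subseteq> set la"
  shows "perm la lb (map g la) = map g lb"
  unfolding perm_def
proof (rule map_cong[OF refl])
  fix x assume "x \<in> set lb"
  hence "x \<in> set la" using sub by blast
  hence "pos la x < length la \<and> la ! pos la x = x" by (rule pos_in[OF d])
  thus "map g la ! pos la x = g x" by simp
qed

lemma list_as_map: "distinct la \<Longrightarrow> length xs = length la \<Longrightarrow> xs = map (\<lambda>C. xs ! pos la C) la"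
proof -
  assume d: "distinct la" and l: "length xs = length la"
  show ?thesis by (rule nth_equalityI) (use l pos_nth[OF d] in simp_all)
qed

lemma perm_perm:
  assumes "distinct la" "distinct lb" "set la = set lb" "length xs = length la"
  shows "perm lb la (perm la lb xs) = xs"
proof -
  have "perm la lb xs = map (\<lambda>C. xs ! pos la C) lb" unfolding perm_def ..
  hence "perm lb la (perm la lb xs) = map (\<lambda>C. xs ! pos la C) la"
    using perm_map[OF assms(2), of la "\<lambda>C. xs ! pos la C"] assms(3) by simp
  thus ?thesis using list_as_map[OF assms(1,4)] by simp
qed

lemma length_perm[simp]: "length (perm la lb xs) = length lb" unfolding perm_def by simp

definition Tm :: "('v \<times> 'v) set \<Rightarrow> ('v \<times> 'v) set \<Rightarrow> 'v set \<Rightarrow>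
    (('v \<times> 'v) set \<times> 'a list \<Rightarrow> 'r::{comm_ring,monoid_mult}) \<Rightarrow> (('v \<times> 'v) set \<times> 'a list \<Rightarrow> 'r)" where
  "Tm le1 le2 V f = (\<lambda>(H, bs). if length bs = length (comp_list le2 V H)
      then eps le1 le2 V H * f (H, perm (comp_list le2 V H) (comp_list le1 V H) bs) else 0)"

lemma len_CL: "finite V \<Longrightarrow> linear_order_on V le \<Longrightarrow> length (comp_list le V H) = card (components V H)"
  using CL[of V le H] distinct_card by metis

lemma Fr_D: "f \<in> Fr V E n \<Longrightarrow> f x \<noteq> 0 \<Longrightarrow> gen_ok V E n x"
  unfolding Fr_def by blast

lemma Fr_fin: "f \<in> Fr V E n \<Longrightarrow> finite {x. f x \<noteq> 0}"
  unfolding Fr_def by blast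

lemma mult_ne0: "(c :: 'r::{comm_ring,monoid_mult}) * x \<noteq> 0 \<Longrightarrow> x \<noteq> 0"
  by auto

lemma Tm_nz:
  assumes "Tm le1 le2 V f (H, bs) \<noteq> 0"
  shows "length bs = length (comp_list le2 V H)" "f (H, perm (comp_list le2 V H) (comp_list le1 V H) bs) \<noteq> 0"
  using assms unfolding Tm_def by (auto split: if_splits)

context
  fixes V :: "'v set" and le1 le2 :: "('v \<times> 'v) set"
  assumes fin: "finite V" and lo1: "linear_order_on V le1" and lo2: "linear_order_on V le2"
begin

lemma CL12: "distinct (comp_list le1 V H)" "distinct (comp_list le2 V H)"
  "set (comp_list le1 V H) = set (comp_list le2 V H)"
  "length (comp_list le1 V H) = length (comp_list le2 V H)"
  using CL[OF fin lo1] CL[OF fin lo2] len_CL[OF fin lo1] len_CL[OF fin lo2] by simp_all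

lemma Tm_Fr:
  assumes f: "f \<in> Fr V E n"
  shows "Tm le1 le2 V f \<in> Fr V E n"
proof -
  let ?T = "Tm le1 le2 V f"
  have sup: "{x. ?T x \<noteq> 0} \<subseteq> (\<lambda>(H, as). (H, perm (comp_list le1 V H) (comp_list le2 V H) as)) ` {x. f x \<noteq> 0}"
  proof
    fix x assume "x \<in> {x. ?T x \<noteq> 0}"
    then obtain H bs where x: "x = (H, bs)" "?T (H, bs) \<noteq> 0" by (cases x) auto
    note nz = Tm_nz[OF x(2)]
    have "bs = perm (comp_list le1 V H) (comp_list le2 V H) (perm (comp_list le2 V H) (comp_list le1 V H) bs)"
      using perm_perm[of "comp_list le2 V H" "comp_list le1 V H" bs] CL12 nz(1) by simp
    thus "x \<in> (\<lambda>(H, as). (H, perm (comp_list le1 V H) (comp_list le2 V H) as)) ` {x. f x \<noteq> 0}"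
      using nz(2) x(1) by (intro image_eqI[where x = "(H, perm (comp_list le2 V H) (comp_list le1 V H) bs)"]) auto
  qed
  have "finite {x. ?T x \<noteq> 0}" using finite_subset[OF sup] Fr_fin[OF f] by blast
  moreover have "gen_ok V E n x" if "?T x \<noteq> 0" for x
  proof -
    obtain H bs where x: "x = (H, bs)" by (cases x)
    note nz = Tm_nz[OF that[unfolded x]]
    have "gen_ok V E n (H, perm (comp_list le2 V H) (comp_list le1 V H) bs)" using Fr_D[OF f nz(2)] .
    thus ?thesis using nz(1) len_CL[OF fin lo2] unfolding x gen_ok_def by simp
  qed
  ultimately show ?thesis unfolding Fr_def by blast
qed

end

lemma Tm_Tm:
  assumes fin: "finite V" and lo1: "linear_order_on V le1" and lo2: "linear_order_on V le2"
    and f: "f \<in> Fr V E n"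
  shows "Tm le2 le1 V (Tm le1 le2 V f) = f"
proof (rule ext, clarify)
  fix H as
  let ?L1 = "comp_list le1 V H" and ?L2 = "comp_list le2 V H"
  note C = CL12[OF fin lo1 lo2]
  show "Tm le2 le1 V (Tm le1 le2 V f) (H, as) = f (H, as)"
  proof (cases "length as = length ?L1")
    case True
    have pp: "perm ?L2 ?L1 (perm ?L1 ?L2 as) = as" using perm_perm[of ?L1 ?L2 as] C True by simp
    have "Tm le2 le1 V (Tm le1 le2 V f) (H, as) = eps le2 le1 V H * (eps le1 le2 V H * f (H, as))"
      unfolding Tm_def using True C pp by simp
    also have "\<dots> = f (H, as)" by (simp add: mult.assoc[symmetric] eps_inv)
    finally show ?thesis .
  next
    case False
    have "f (H, as) = 0"
    proof (rule ccontr)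
      assume "f (H, as) \<noteq> 0"
      hence "gen_ok V E n (H, as)" by (rule Fr_D[OF f])
      thus False using False len_CL[OF fin lo1] unfolding gen_ok_def by simp
    qed
    thus ?thesis unfolding Tm_def using False by simp
  qed
qed

lemma Tm_add: "Tm le1 le2 V (\<lambda>y. f y + g y) = (\<lambda>y. Tm le1 le2 V f y + Tm le1 le2 V g y)"
  unfolding Tm_def by (auto simp: distrib_left)

lemma Tm_diff: "Tm le1 le2 V (\<lambda>y. f y - g y) = (\<lambda>y. Tm le1 le2 V f y - Tm le1 le2 V g y)"
  unfolding Tm_def by (auto simp: right_diff_distrib)

lemma Tm_smult: "Tm le1 le2 V (\<lambda>y. r * f y) = (\<lambda>y. r * Tm le1 le2 V f y)"
  unfolding Tm_def by (auto simp: mult.left_commute)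

lemma Tm_zero: "Tm le1 le2 V (\<lambda>y. 0) = (\<lambda>y. 0)"
  unfolding Tm_def by auto

lemma step_of:
  assumes "digraph V E" "is_multipath V E H" "(a, b) \<in> E" "(a, b) \<notin> H" "is_multipath V E (insert (a, b) H)"
  shows "step V E H a b"
proof -
  have "H \<subseteq> E" using assms(2) unfolding is_multipath_def by blast
  moreover have "E \<subseteq> V \<times> V" "finite V" using assms(1) unfolding digraph_def by blast+
  ultimately show ?thesis using assms unfolding step_def by blast
qed

context step begin

lemma edge_map_map:
  assumes lo: "linear_order_on V le"
  shows "edge_map le V H (a, b) (map g (comp_list le V H)) =
         map (g(uu := g ca * g cb)) (comp_list le V (insert (a, b) H))"
proof -
  have ia: "comp_idx le V H a = s le" "comp_idx le V H b = t le"
    using comp_idx_pos[OF fin lo aV] comp_idx_pos[OF fin lo bV] by simp_all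
  have "edge_map le V H (a, b) (map g (comp_list le V H)) =
        mrg (s le) (t le) (map g (comp_list le V H) ! s le * map g (comp_list le V H) ! t le) (map g (comp_list le V H))"
    unfolding edge_map_def merge_list_mrg fst_conv snd_conv ia ..
  also have "\<dots> = mrg (s le) (t le) (g ca * g cb) (map g (comp_list le V H))"
    using st[OF lo] by simp
  also have "\<dots> = map (g(uu := g ca * g cb)) (comp_list le V (insert (a, b) H))"
    unfolding CL'[OF lo] by (rule map_mrg[OF lo])
  finally show ?thesis .
qed

end

lemma main_id:
  assumes dg: "digraph V E" and lo1: "linear_order_on V le1" and lo2: "linear_order_on V le2"
    and f: "f \<in> Fr V E n"
  shows "Tm le1 le2 V (dfree le1 V E f) = dfree le2 V E (Tm le1 le2 V f)"
proof (rule ext, clarify)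
  fix H' bs
  have fin: "finite V" using dg unfolding digraph_def by blast
  note C = CL12[OF fin lo1 lo2]
  define L1 where "L1 H = comp_list le1 V H" for H
  define L2 where "L2 H = comp_list le2 V H" for H
  let ?T = "Tm le1 le2 V f"
  define S1 where "S1 = {(H, as, e). f (H, as) \<noteq> 0 \<and> e \<in> E \<and> e \<notin> H \<and> is_multipath V E (insert e H) \<and>
      H' = insert e H \<and> perm (L2 H') (L1 H') bs = edge_map le1 V H e as}"
  define S2 where "S2 = {(H, cs, e). ?T (H, cs) \<noteq> 0 \<and> e \<in> E \<and> e \<notin> H \<and> is_multipath V E (insert e H) \<and>
      H' = insert e H \<and> bs = edge_map le2 V H e cs}"
  have R: "dfree le2 V E ?T (H', bs) = (\<Sum>(H, cs, e) \<in> S2. edge_sign le2 V H e * ?T (H, cs))"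
    unfolding dfree_def S2_def by simp
  have key: "step V E H (fst e) (snd e) \<and> length as = length (L1 H) \<and>
      as = map (\<lambda>C. as ! pos (L1 H) C) (L1 H) \<and>
      perm (L1 H) (L2 H) as = map (\<lambda>C. as ! pos (L1 H) C) (L2 H) \<and>
      edge_map le1 V H e as = map ((\<lambda>C. as ! pos (L1 H) C)(vcomp V H (fst e) \<union> vcomp V H (snd e) :=
          as ! pos (L1 H) (vcomp V H (fst e)) * as ! pos (L1 H) (vcomp V H (snd e)))) (L1 (insert e H)) \<and>
      edge_map le2 V H e (perm (L1 H) (L2 H) as) = map ((\<lambda>C. as ! pos (L1 H) C)(vcomp V H (fst e) \<union> vcomp V H (snd e) :=
          as ! pos (L1 H) (vcomp V H (fst e)) * as ! pos (L1 H) (vcomp V H (snd e)))) (L2 (insert e H))"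
    if nz: "f (H, as) \<noteq> 0" and e: "e \<in> E" "e \<notin> H" "is_multipath V E (insert e H)" for H as e
  proof -
    obtain a b where ab: "e = (a, b)" by (cases e)
    have g: "gen_ok V E n (H, as)" by (rule Fr_D[OF f nz])
    have stp: "step V E H a b" using step_of[OF dg _ e[unfolded ab]] g unfolding gen_ok_def by simp
    have len: "length as = length (L1 H)" using g len_CL[OF fin lo1] unfolding gen_ok_def L1_def by simp
    define g0 where "g0 = (\<lambda>C. as ! pos (L1 H) C)"
    have asm: "as = map g0 (L1 H)" unfolding g0_def by (rule list_as_map[OF C(1)[of H, folded L1_def] len])
    have pm: "perm (L1 H) (L2 H) as = map g0 (L2 H)"
      unfolding asm L1_def L2_def by (rule perm_map) (use C in auto)
    have e1: "edge_map le1 V H e as = map (g0(vcomp V H a \<union> vcomp V H b := g0 (vcomp V H a) * g0 (vcomp V H b))) (L1 (insert e H))"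
      unfolding asm ab L1_def by (rule step.edge_map_map[OF stp lo1])
    have e2: "edge_map le2 V H e (perm (L1 H) (L2 H) as) = map (g0(vcomp V H a \<union> vcomp V H b := g0 (vcomp V H a) * g0 (vcomp V H b))) (L2 (insert e H))"
      unfolding pm unfolding ab L2_def by (rule step.edge_map_map[OF stp lo2])
    show ?thesis using stp len asm pm e1 e2 unfolding ab g0_def by simp
  qed
  show "Tm le1 le2 V (dfree le1 V E f) (H', bs) = dfree le2 V E ?T (H', bs)"
  proof (cases "length bs = length (L2 H')")
    case False
    have "S2 = {}"
    proof (rule ccontr)
      assume "S2 \<noteq> {}"
      then obtain H cs e where m: "(H, cs, e) \<in> S2" by auto
      hence Tnz: "?T (H, cs) \<noteq> 0" and e: "e \<in> E" "e \<notin> H" "is_multipath V E (insert e H)"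
        and H': "H' = insert e H" and bs: "bs = edge_map le2 V H e cs" unfolding S2_def by auto
      note nz = Tm_nz[OF Tnz]
      let ?as = "perm (L2 H) (L1 H) cs"
      have pp: "perm (L1 H) (L2 H) ?as = cs" unfolding L1_def L2_def
        using perm_perm[of "comp_list le2 V H" "comp_list le1 V H" cs] C nz(1) by simp
      obtain G where G: "edge_map le2 V H e (perm (L1 H) (L2 H) ?as) = map G (L2 (insert e H))"
        using key[OF nz(2)[folded L1_def L2_def] e] by blast
      have "bs = map G (L2 H')" using G unfolding pp bs H' .
      hence "length bs = length (L2 H')" by simp
      thus False using False by simp
    qed
    thus ?thesis using R unfolding Tm_def L2_def using False[unfolded L2_def] by simp
  next
    case True
    have L: "Tm le1 le2 V (dfree le1 V E f) (H', bs) =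
        eps le1 le2 V H' * (\<Sum>(H, as, e) \<in> S1. edge_sign le1 V H e * f (H, as))"
      unfolding Tm_def dfree_def S1_def using True unfolding L1_def L2_def by simp
    also have "\<dots> = (\<Sum>(H, as, e) \<in> S1. eps le1 le2 V H' * edge_sign le1 V H e * f (H, as))"
      by (simp add: sum_distrib_left case_prod_beta mult.assoc)
    also have "\<dots> = (\<Sum>(H, cs, e) \<in> S2. edge_sign le2 V H e * ?T (H, cs))"
    proof (rule sum.reindex_bij_witness[where j = "\<lambda>(H, as, e). (H, perm (L1 H) (L2 H) as, e)"
          and i = "\<lambda>(H, cs, e). (H, perm (L2 H) (L1 H) cs, e)"])
      fix x assume x: "x \<in> S1"
      then obtain H as e where xe: "x = (H, as, e)" by (cases x) auto
      have nz: "f (H, as) \<noteq> 0" and e: "e \<in> E" "e \<notin> H" "is_multipath V E (insert e H)"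
        and H': "H' = insert e H" and bs1: "perm (L2 H') (L1 H') bs = edge_map le1 V H e as"
        using x unfolding xe S1_def by auto
      note k = key[OF nz e]
      have pp: "perm (L2 H) (L1 H) (perm (L1 H) (L2 H) as) = as" unfolding L1_def L2_def
        using perm_perm[of "comp_list le1 V H" "comp_list le2 V H" as] C k[unfolded L1_def] by simp
      show "(\<lambda>(H, cs, e). (H, perm (L2 H) (L1 H) cs, e)) ((\<lambda>(H, as, e). (H, perm (L1 H) (L2 H) as, e)) x) = x"
        unfolding xe using pp by simp
      have Tval: "?T (H, perm (L1 H) (L2 H) as) = eps le1 le2 V H * f (H, as)"
        unfolding Tm_def using pp C unfolding L1_def L2_def by simp
      have Tnz: "?T (H, perm (L1 H) (L2 H) as) \<noteq> 0"
      proof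
        assume "?T (H, perm (L1 H) (L2 H) as) = 0"
        hence "eps le2 le1 V H * (eps le1 le2 V H * f (H, as)) = 0" using Tval by simp
        thus False using nz by (simp add: mult.assoc[symmetric] eps_inv)
      qed
      have bs2: "bs = edge_map le2 V H e (perm (L1 H) (L2 H) as)"
      proof -
        have "bs = perm (L1 H') (L2 H') (perm (L2 H') (L1 H') bs)" unfolding L1_def L2_def
          using perm_perm[of "comp_list le2 V H'" "comp_list le1 V H'" bs] C True[unfolded L2_def] by simp
        also have "\<dots> = perm (L1 H') (L2 H') (edge_map le1 V H e as)" using bs1 by simp
        also obtain G where G1: "edge_map le1 V H e as = map G (L1 (insert e H))"
          and G2: "edge_map le2 V H e (perm (L1 H) (L2 H) as) = map G (L2 (insert e H))" using k by blast
        have pm: "perm (L1 H') (L2 H') (map G (L1 H')) = map G (L2 H')" unfolding L1_def L2_def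
          by (rule perm_map) (use C in auto)
        have "perm (L1 H') (L2 H') (edge_map le1 V H e as) = edge_map le2 V H e (perm (L1 H) (L2 H) as)"
          unfolding G1 G2 H'[symmetric] by (rule pm)
        finally show ?thesis .
      qed
      show "(\<lambda>(H, as, e). (H, perm (L1 H) (L2 H) as, e)) x \<in> S2"
        unfolding xe S2_def using Tnz e H' bs2 by simp
      obtain a b where ab: "e = (a, b)" by (cases e)
      have stp: "step V E H a b" using k ab by simp
      have sg: "eps le1 le2 V H * edge_sign le2 V H e * f (H, as) = eps le1 le2 V H' * edge_sign le1 V H e * f (H, as)"
        unfolding ab H' by (simp add: step.sign_rel[OF stp lo1 lo2])
      show "(\<lambda>(H, cs, e). edge_sign le2 V H e * ?T (H, cs)) ((\<lambda>(H, as, e). (H, perm (L1 H) (L2 H) as, e)) x) =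
            (\<lambda>(H, as, e). eps le1 le2 V H' * edge_sign le1 V H e * f (H, as)) x"
      proof -
        have "edge_sign le2 V H e * (eps le1 le2 V H * f (H, as)) = (eps le1 le2 V H * edge_sign le2 V H e) * f (H, as)"
          by (simp only: ac_simps)
        also have "\<dots> = eps le1 le2 V H' * edge_sign le1 V H e * f (H, as)" by (rule sg)
        finally show ?thesis unfolding xe using Tval by simp
      qed
    next
      fix y assume y: "y \<in> S2"
      then obtain H cs e where ye: "y = (H, cs, e)" by (cases y) auto
      have Tnz: "?T (H, cs) \<noteq> 0" and e: "e \<in> E" "e \<notin> H" "is_multipath V E (insert e H)"
        and H': "H' = insert e H" and bs: "bs = edge_map le2 V H e cs"
        using y unfolding ye S2_def by auto
      note nz = Tm_nz[OF Tnz]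
      let ?as = "perm (L2 H) (L1 H) cs"
      have nz2: "f (H, ?as) \<noteq> 0" using nz(2) unfolding L1_def L2_def .
      note k = key[OF nz2 e]
      have pp: "perm (L1 H) (L2 H) ?as = cs" unfolding L1_def L2_def
        using perm_perm[of "comp_list le2 V H" "comp_list le1 V H" cs] C nz(1) by simp
      show "(\<lambda>(H, as, e). (H, perm (L1 H) (L2 H) as, e)) ((\<lambda>(H, cs, e). (H, perm (L2 H) (L1 H) cs, e)) y) = y"
        unfolding ye using pp by simp
      obtain G where G1: "edge_map le1 V H e ?as = map G (L1 (insert e H))"
        and G2: "edge_map le2 V H e (perm (L1 H) (L2 H) ?as) = map G (L2 (insert e H))" using k by blast
      have pm: "perm (L2 H') (L1 H') (map G (L2 H')) = map G (L1 H')" unfolding L1_def L2_def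
        by (rule perm_map) (use C in auto)
      have bs1: "perm (L2 H') (L1 H') bs = edge_map le1 V H e ?as"
        unfolding G1 bs using G2[unfolded pp] H' pm by simp
      show "(\<lambda>(H, cs, e). (H, perm (L2 H) (L1 H) cs, e)) y \<in> S1"
        unfolding ye S1_def using nz2 e H' bs1 by simp
    qed
    finally show ?thesis using R by simp
  qed
qed

lemma Fr_I: "finite {y. h y \<noteq> 0} \<Longrightarrow> (\<And>y. h y \<noteq> 0 \<Longrightarrow> gen_ok V E n y) \<Longrightarrow> h \<in> Fr V E n"
  unfolding Fr_def by blast

lemma Nrel_Fr: "h \<in> Nrel sm V E n \<Longrightarrow> h \<in> Fr V E n"
proof (induction rule: Nrel.induct)
  case (gen_add H as i a b)
  let ?h = "\<lambda>y. delta (H, as[i := a + b]) y - delta (H, as[i := a]) y - delta (H, as[i := b]) y"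
  have sub: "{y. ?h y \<noteq> 0} \<subseteq> {(H, as[i := a + b]), (H, as[i := a]), (H, as[i := b])}"
    unfolding delta_def by auto
  have g: "gen_ok V E n (H, as[i := c])" for c using gen_add.hyps unfolding gen_ok_def by simp
  show ?case
  proof (rule Fr_I)
    show "finite {y. ?h y \<noteq> 0}" by (rule finite_subset[OF sub]) simp
    fix y assume "?h y \<noteq> 0"
    hence "y \<in> {(H, as[i := a + b]), (H, as[i := a]), (H, as[i := b])}" using sub by blast
    thus "gen_ok V E n y" using g by blast
  qed
next
  case (gen_smult H as i r a)
  let ?h = "\<lambda>y. delta (H, as[i := sm r a]) y - r * delta (H, as[i := a]) y"
  have sub: "{y. ?h y \<noteq> 0} \<subseteq> {(H, as[i := sm r a]), (H, as[i := a])}"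
    unfolding delta_def by auto
  have g: "gen_ok V E n (H, as[i := c])" for c using gen_smult.hyps unfolding gen_ok_def by simp
  show ?case
  proof (rule Fr_I)
    show "finite {y. ?h y \<noteq> 0}" by (rule finite_subset[OF sub]) simp
    fix y assume "?h y \<noteq> 0"
    hence "y \<in> {(H, as[i := sm r a]), (H, as[i := a])}" using sub by blast
    thus "gen_ok V E n y" using g by blast
  qed
next
  case zero show ?case by (rule Fr_I) simp_all
next
  case (add f g)
  have sub: "{y. f y + g y \<noteq> 0} \<subseteq> {y. f y \<noteq> 0} \<union> {y. g y \<noteq> 0}" by auto
  show ?case
  proof (rule Fr_I)
    show "finite {y. f y + g y \<noteq> 0}"
      by (rule finite_subset[OF sub]) (use Fr_fin[OF add.IH(1)] Fr_fin[OF add.IH(2)] in simp)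
    fix y assume "f y + g y \<noteq> 0"
    hence "f y \<noteq> 0 \<or> g y \<noteq> 0" by auto
    thus "gen_ok V E n y" using Fr_D[OF add.IH(1)] Fr_D[OF add.IH(2)] by blast
  qed
next
  case (smult f r)
  have sub: "{y. r * f y \<noteq> 0} \<subseteq> {y. f y \<noteq> 0}" by auto
  show ?case
  proof (rule Fr_I)
    show "finite {y. r * f y \<noteq> 0}" by (rule finite_subset[OF sub]) (use Fr_fin[OF smult.IH] in simp)
    fix y assume "r * f y \<noteq> 0"
    hence "f y \<noteq> 0" by auto
    thus "gen_ok V E n y" using Fr_D[OF smult.IH] by blast
  qed
qed

lemma Nrel_neg: "f \<in> Nrel sm V E n \<Longrightarrow> (\<lambda>y. - f y) \<in> Nrel sm V E n"
  using Nrel.smult[of f sm V E n "- 1"] by simp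

lemma Nrel_diff: "f \<in> Nrel sm V E n \<Longrightarrow> g \<in> Nrel sm V E n \<Longrightarrow> (\<lambda>y. f y - g y) \<in> Nrel sm V E n"
  using Nrel.add[OF _ Nrel_neg, of f sm V E n g] by simp

lemma Nrel_sum: "finite A \<Longrightarrow> (\<And>e. e \<in> A \<Longrightarrow> G e \<in> Nrel sm V E n) \<Longrightarrow> (\<lambda>y. \<Sum>e\<in>A. G e y) \<in> Nrel sm V E n"
proof (induction A rule: finite_induct)
  case empty thus ?case using Nrel.zero by simp
next
  case (insert x F)
  have "(\<lambda>y. G x y + (\<Sum>e\<in>F. G e y)) \<in> Nrel sm V E n"
    using Nrel.add[OF _ insert.IH] insert.prems by simp
  thus ?case using insert.hyps by simp
qed

lemma map_upd_pos:
  assumes "distinct L" "C \<in> set L"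
  shows "map (g(C := v)) L = (map g L)[pos L C := v]"
proof (rule nth_equalityI)
  show "length (map (g(C := v)) L) = length ((map g L)[pos L C := v])" by simp
  fix k assume k: "k < length (map (g(C := v)) L)"
  have p: "pos L C < length L" "L ! pos L C = C" using pos_in[OF assms] by simp_all
  show "map (g(C := v)) L ! k = (map g L)[pos L C := v] ! k"
  proof (cases "k = pos L C")
    case True thus ?thesis using p k by simp
  next
    case False
    hence "L ! k \<noteq> C" using p k assms(1) nth_eq_iff_index_eq by fastforce
    thus ?thesis using False k by simp
  qed
qed

lemma upd_map: "distinct L \<Longrightarrow> i < length L \<Longrightarrow> (map g L)[i := v] = map (g(L ! i := v)) L"
  using map_upd_pos[of L "L ! i" g v] pos_nth[of L i] by simp

lemma Tm_delta:
  assumes fin: "finite V" and lo1: "linear_order_on V le1" and lo2: "linear_order_on V le2"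
    and len: "length cs = length (comp_list le1 V H)"
  shows "Tm le1 le2 V (delta (H, cs)) = (\<lambda>y. eps le1 le2 V H * delta (H, perm (comp_list le1 V H) (comp_list le2 V H) cs) y)"
proof (rule ext, clarify)
  fix H2 bs
  note C = CL12[OF fin lo1 lo2]
  show "Tm le1 le2 V (delta (H, cs)) (H2, bs) = eps le1 le2 V H * delta (H, perm (comp_list le1 V H) (comp_list le2 V H) cs) (H2, bs)"
  proof (cases "H2 = H \<and> length bs = length (comp_list le2 V H)")
    case True
    have "perm (comp_list le2 V H) (comp_list le1 V H) bs = cs \<longleftrightarrow> bs = perm (comp_list le1 V H) (comp_list le2 V H) cs"
      using perm_perm[of "comp_list le2 V H" "comp_list le1 V H" bs] perm_perm[of "comp_list le1 V H" "comp_list le2 V H" cs]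
        C True len by metis
    thus ?thesis unfolding Tm_def delta_def using True by auto
  next
    case False
    thus ?thesis unfolding Tm_def delta_def using C by auto
  qed
qed

lemma perm_upd:
  assumes "distinct la" "set la = set lb" "length xs = length la" "i < length la" "distinct lb"
  shows "perm la lb (xs[i := v]) = (perm la lb xs)[pos lb (la ! i) := v]"
proof -
  define g where "g C = xs ! pos la C" for C
  have xs: "xs = map g la" unfolding g_def by (rule list_as_map[OF assms(1,3)])
  have "perm la lb (xs[i := v]) = perm la lb (map (g(la ! i := v)) la)" unfolding xs upd_map[OF assms(1,4)] ..
  also have "\<dots> = map (g(la ! i := v)) lb" by (rule perm_map) (use assms in auto)
  also have "\<dots> = (map g lb)[pos lb (la ! i) := v]"
  proof (rule map_upd_pos)
    show "distinct lb" by (rule assms(5))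
    show "la ! i \<in> set lb" using assms(2,4) nth_mem by blast
  qed
  also have "map g lb = perm la lb xs" unfolding xs by (rule perm_map[symmetric]) (use assms in auto)
  finally show ?thesis .
qed

lemma Tm_Nrel:
  assumes fin: "finite V" and lo1: "linear_order_on V le1" and lo2: "linear_order_on V le2"
  shows "h \<in> Nrel sm V E n \<Longrightarrow> Tm le1 le2 V h \<in> Nrel sm V E n"
proof (induction rule: Nrel.induct)
  case (gen_add H as i a b)
  note C = CL12[OF fin lo1 lo2]
  let ?L1 = "comp_list le1 V H" and ?L2 = "comp_list le2 V H"
  let ?ps = "perm ?L1 ?L2 as" and ?j = "pos ?L2 (?L1 ! i)" and ?e = "eps le1 le2 V H"
  have len: "length as = length ?L1" using gen_add.hyps(1) len_CL[OF fin lo1] unfolding gen_ok_def by simp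
  have il: "i < length ?L1" using gen_add.hyps(2) len by simp
  have pu: "perm ?L1 ?L2 (as[i := c]) = ?ps[?j := c]" for c
    by (rule perm_upd) (use C len il in simp_all)
  have td: "Tm le1 le2 V (delta (H, as[i := c])) = (\<lambda>y. ?e * delta (H, ?ps[?j := c]) y)" for c
    using Tm_delta[OF fin lo1 lo2, of "as[i := c]" H] len pu by simp
  have "Tm le1 le2 V (\<lambda>y. delta (H, as[i := a + b]) y - delta (H, as[i := a]) y - delta (H, as[i := b]) y)
      = (\<lambda>y. Tm le1 le2 V (delta (H, as[i := a + b])) y - Tm le1 le2 V (delta (H, as[i := a])) y
             - Tm le1 le2 V (delta (H, as[i := b])) y)"
    unfolding Tm_def by (auto simp: right_diff_distrib)
  also have "\<dots> = (\<lambda>y. ?e * (delta (H, ?ps[?j := a + b]) y - delta (H, ?ps[?j := a]) y - delta (H, ?ps[?j := b]) y))"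
    unfolding td by (simp add: right_diff_distrib)
  finally have eq: "Tm le1 le2 V (\<lambda>y. delta (H, as[i := a + b]) y - delta (H, as[i := a]) y - delta (H, as[i := b]) y)
      = (\<lambda>y. ?e * (delta (H, ?ps[?j := a + b]) y - delta (H, ?ps[?j := a]) y - delta (H, ?ps[?j := b]) y))" .
  have g: "gen_ok V E n (H, ?ps)" using gen_add.hyps(1) len_CL[OF fin lo2] unfolding gen_ok_def by simp
  have jl: "?j < length ?ps"
  proof -
    have "?L1 ! i \<in> set ?L2" using C(3)[of H] nth_mem[OF il] by simp
    thus ?thesis using pos_in[OF C(2)[of H]] by simp
  qed
  show ?case unfolding eq by (rule Nrel.smult[OF Nrel.gen_add[OF g jl]])
next
  case (gen_smult H as i r a)
  note C = CL12[OF fin lo1 lo2]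
  let ?L1 = "comp_list le1 V H" and ?L2 = "comp_list le2 V H"
  let ?ps = "perm ?L1 ?L2 as" and ?j = "pos ?L2 (?L1 ! i)" and ?e = "eps le1 le2 V H"
  have len: "length as = length ?L1" using gen_smult.hyps(1) len_CL[OF fin lo1] unfolding gen_ok_def by simp
  have il: "i < length ?L1" using gen_smult.hyps(2) len by simp
  have pu: "perm ?L1 ?L2 (as[i := c]) = ?ps[?j := c]" for c
    by (rule perm_upd) (use C len il in simp_all)
  have td: "Tm le1 le2 V (delta (H, as[i := c])) = (\<lambda>y. ?e * delta (H, ?ps[?j := c]) y)" for c
    using Tm_delta[OF fin lo1 lo2, of "as[i := c]" H] len pu by simp
  have "Tm le1 le2 V (\<lambda>y. delta (H, as[i := sm r a]) y - r * delta (H, as[i := a]) y)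
      = (\<lambda>y. Tm le1 le2 V (delta (H, as[i := sm r a])) y - r * Tm le1 le2 V (delta (H, as[i := a])) y)"
    unfolding Tm_def by (auto simp: right_diff_distrib mult.left_commute)
  also have "\<dots> = (\<lambda>y. ?e * (delta (H, ?ps[?j := sm r a]) y - r * delta (H, ?ps[?j := a]) y))"
    unfolding td by (simp add: right_diff_distrib mult.left_commute)
  finally have eq: "Tm le1 le2 V (\<lambda>y. delta (H, as[i := sm r a]) y - r * delta (H, as[i := a]) y)
      = (\<lambda>y. ?e * (delta (H, ?ps[?j := sm r a]) y - r * delta (H, ?ps[?j := a]) y))" .
  have g: "gen_ok V E n (H, ?ps)" using gen_smult.hyps(1) len_CL[OF fin lo2] unfolding gen_ok_def by simp
  have jl: "?j < length ?ps"
  proof -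
    have "?L1 ! i \<in> set ?L2" using C(3)[of H] nth_mem[OF il] by simp
    thus ?thesis using pos_in[OF C(2)[of H]] by simp
  qed
  show ?case unfolding eq by (rule Nrel.smult[OF Nrel.gen_smult[OF g jl]])
next
  case zero thus ?case unfolding Tm_zero by (rule Nrel.zero)
next
  case (add f g) show ?case unfolding Tm_add by (rule Nrel.add[OF add.IH])
next
  case (smult f r) show ?case unfolding Tm_smult by (rule Nrel.smult[OF smult.IH])
qed

definition dlin :: "(('v \<times> 'v) set \<times> 'a list) set \<Rightarrow> ('v \<times> 'v) set \<Rightarrow> 'v set \<Rightarrow> ('v \<times> 'v) set \<Rightarrow>
    (('v \<times> 'v) set \<times> 'a::{ring,monoid_mult} list \<Rightarrow> 'r::{comm_ring,monoid_mult}) \<Rightarrow> (('v \<times> 'v) set \<times> 'a list \<Rightarrow> 'r)" where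
  "dlin F le V E f = (\<lambda>(H', bs). \<Sum>x\<in>F. \<Sum>e\<in>E.
     if e \<notin> fst x \<and> is_multipath V E (insert e (fst x)) \<and> H' = insert e (fst x) \<and> bs = edge_map le V (fst x) e (snd x)
     then edge_sign le V (fst x) e * f x else 0)"

lemma dfree_dlin:
  fixes f :: "('v \<times> 'v) set \<times> 'a::{ring,monoid_mult} list \<Rightarrow> 'r::{comm_ring,monoid_mult}"
  assumes fF: "finite F" and fE: "finite E" and sub: "{x. f x \<noteq> 0} \<subseteq> F"
  shows "dfree le V E f = dlin F le V E f"
proof (rule ext, clarify)
  fix H' and bs :: "'a list"
  define c where "c x e \<longleftrightarrow> e \<notin> fst x \<and> is_multipath V E (insert e (fst x)) \<and> H' = insert e (fst x) \<and>
      bs = edge_map le V (fst x) e (snd x)" for x e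
  define S where "S = {(H, as, e). f (H, as) \<noteq> 0 \<and> e \<in> E \<and> e \<notin> H \<and>
                         is_multipath V E (insert e H) \<and> H' = insert e H \<and> bs = edge_map le V H e as}"
  define S' where "S' = {p \<in> F \<times> E. f (fst p) \<noteq> 0 \<and> c (fst p) (snd p)}"
  have "dlin F le V E f (H', bs) = (\<Sum>x\<in>F. \<Sum>e\<in>E. if c x e then edge_sign le V (fst x) e * f x else 0)"
    unfolding dlin_def c_def by simp
  also have "\<dots> = (\<Sum>p\<in>F \<times> E. if c (fst p) (snd p) then edge_sign le V (fst (fst p)) (snd p) * f (fst p) else 0)"
    by (simp add: sum.cartesian_product case_prod_beta)
  also have "\<dots> = (\<Sum>p\<in>S'. if c (fst p) (snd p) then edge_sign le V (fst (fst p)) (snd p) * f (fst p) else 0)"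
    by (rule sum.mono_neutral_right) (use fF fE in \<open>auto simp: S'_def\<close>)
  also have "\<dots> = (\<Sum>p\<in>S'. edge_sign le V (fst (fst p)) (snd p) * f (fst p))"
    by (rule sum.cong) (auto simp: S'_def)
  also have "\<dots> = (\<Sum>(H, as, e)\<in>S. edge_sign le V H e * f (H, as))"
  proof (rule sum.reindex_bij_witness[where j = "\<lambda>((H, as), e). (H, as, e)" and i = "\<lambda>(H, as, e). ((H, as), e)"])
    fix p assume "p \<in> S'"
    thus "(\<lambda>(H, as, e). ((H, as), e)) ((\<lambda>((H, as), e). (H, as, e)) p) = p" by (auto split: prod.split)
    show "(\<lambda>((H, as), e). (H, as, e)) p \<in> S" using \<open>p \<in> S'\<close> unfolding S'_def S_def c_def by (auto split: prod.split)
    show "(\<lambda>(H, as, e). edge_sign le V H e * f (H, as)) ((\<lambda>((H, as), e). (H, as, e)) p) =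
          edge_sign le V (fst (fst p)) (snd p) * f (fst p)" by (auto split: prod.split)
  next
    fix q assume "q \<in> S"
    thus "(\<lambda>((H, as), e). (H, as, e)) ((\<lambda>(H, as, e). ((H, as), e)) q) = q" by (auto split: prod.split)
    show "(\<lambda>(H, as, e). ((H, as), e)) q \<in> S'" using \<open>q \<in> S\<close> sub unfolding S'_def S_def c_def by (auto split: prod.split)
  qed
  also have "\<dots> = dfree le V E f (H', bs)" unfolding dfree_def S_def by simp
  finally show "dfree le V E f (H', bs) = dlin F le V E f (H', bs)" by simp
qed

lemma dlin_add: "dlin F le V E (\<lambda>y. f y + g y) = (\<lambda>y. dlin F le V E f y + dlin F le V E g y)"
  unfolding dlin_def by (intro ext) (auto simp: sum.distrib[symmetric] distrib_left split: prod.split intro!: sum.cong)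

lemma dlin_diff: "dlin F le V E (\<lambda>y. f y - g y) = (\<lambda>y. dlin F le V E f y - dlin F le V E g y)"
  unfolding dlin_def by (intro ext) (auto simp: sum_subtractf[symmetric] right_diff_distrib split: prod.split intro!: sum.cong)

lemma dlin_smult: "dlin F le V E (\<lambda>y. r * f y) = (\<lambda>y. r * dlin F le V E f y)"
  unfolding dlin_def by (intro ext) (auto simp: sum_distrib_left mult.left_commute split: prod.split intro!: sum.cong)

lemma supp_add: "{y. f y + g y \<noteq> (0::'r::monoid_add)} \<subseteq> {y. f y \<noteq> 0} \<union> {y. g y \<noteq> 0}" by auto
lemma supp_diff: "{y. f y - g y \<noteq> (0::'r::ring)} \<subseteq> {y. f y \<noteq> 0} \<union> {y. g y \<noteq> 0}" by auto
lemma supp_smult: "{y. r * f y \<noteq> (0::'r::ring)} \<subseteq> {y. f y \<noteq> 0}" by auto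

lemma dfree_add:
  assumes "finite {y. f y \<noteq> 0}" "finite {y. g y \<noteq> 0}" "finite E"
  shows "dfree le V E (\<lambda>y. f y + g y) = (\<lambda>y. dfree le V E f y + dfree le V E g y)"
proof -
  let ?F = "{y. f y \<noteq> 0} \<union> {y. g y \<noteq> 0}"
  have fF: "finite ?F" using assms by simp
  show ?thesis
    using dfree_dlin[OF fF assms(3) supp_add] dfree_dlin[OF fF assms(3), of f] dfree_dlin[OF fF assms(3), of g]
      dlin_add by auto
qed

lemma dfree_diff:
  assumes "finite {y. f y \<noteq> 0}" "finite {y. g y \<noteq> 0}" "finite E"
  shows "dfree le V E (\<lambda>y. f y - g y) = (\<lambda>y. dfree le V E f y - dfree le V E g y)"
proof -
  let ?F = "{y. f y \<noteq> 0} \<union> {y. g y \<noteq> 0}"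
  have fF: "finite ?F" using assms by simp
  show ?thesis
    using dfree_dlin[OF fF assms(3) supp_diff] dfree_dlin[OF fF assms(3), of f] dfree_dlin[OF fF assms(3), of g]
      dlin_diff by auto
qed

lemma dfree_smult:
  assumes "finite {y. f y \<noteq> 0}" "finite E"
  shows "dfree le V E (\<lambda>y. r * f y) = (\<lambda>y. r * dfree le V E f y)"
proof -
  have fF: "finite {y. f y \<noteq> 0}" using assms by simp
  show ?thesis
    using dfree_dlin[OF fF assms(2) supp_smult] dfree_dlin[OF fF assms(2), of f] dlin_smult by auto
qed

lemma dfree_zero: "dfree le V E (\<lambda>y. 0) = (\<lambda>y. 0)"
  unfolding dfree_def by auto

lemma supp_delta: "finite {y. delta x y \<noteq> 0}"
proof -
  have "{y. delta x y \<noteq> 0} \<subseteq> {x}" unfolding delta_def by auto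
  thus ?thesis using finite_subset by blast
qed

definition dsum where
  "dsum le V E H cs = (\<lambda>y. \<Sum>e\<in>E. if e \<notin> H \<and> is_multipath V E (insert e H)
      then edge_sign le V H e * delta (insert e H, edge_map le V H e cs) y else 0)"

lemma dfree_delta:
  assumes fE: "finite E"
  shows "dfree le V E (delta (H, cs)) = dsum le V E H cs"
proof -
  have "dfree le V E (delta (H, cs)) = dlin {(H, cs)} le V E (delta (H, cs))"
    by (rule dfree_dlin[OF _ fE]) (auto simp: delta_def)
  also have "\<dots> = dsum le V E H cs"
    unfolding dlin_def dsum_def by (auto simp: delta_def intro!: sum.cong)
  finally show ?thesis .
qed

context step begin

lemma finH: "finite H" using finite_subset[OF HV] fin by blast

lemma em_as_map:
  assumes lo: "linear_order_on V le" and len: "length as = length (comp_list le V H)"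
  shows "edge_map le V H (a, b) as = map ((\<lambda>C. as ! pos (comp_list le V H) C)(uu :=
      as ! pos (comp_list le V H) ca * as ! pos (comp_list le V H) cb)) (comp_list le V (insert (a, b) H))"
proof -
  define g where "g = (\<lambda>C. as ! pos (comp_list le V H) C)"
  have asm: "as = map g (comp_list le V H)" unfolding g_def by (rule list_as_map[OF L_props(2)[OF lo] len])
  have "edge_map le V H (a, b) as = map (g(uu := g ca * g cb)) (comp_list le V (insert (a, b) H))"
    using edge_map_map[OF lo, of g] asm by simp
  thus ?thesis unfolding g_def .
qed

lemma gen_ok_step:
  assumes lo: "linear_order_on V le" and g: "gen_ok V E n (H, as)"
  shows "gen_ok V E (Suc n) (insert (a, b) H, edge_map le V H (a, b) as)"
proof -
  have len: "length as = length (comp_list le V H)" using g len_CL[OF fin lo] unfolding gen_ok_def by simp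
  have "length (edge_map le V H (a, b) as) = card (components V (insert (a, b) H))"
    unfolding em_as_map[OF lo len] using len_CL[OF fin lo] by simp
  moreover have "card (insert (a, b) H) = Suc n" using g finH nH unfolding gen_ok_def by simp
  ultimately show ?thesis using mpH' unfolding gen_ok_def by simp
qed

lemma em_upd:
  assumes lo: "linear_order_on V le" and alg: "is_algebra sm"
    and len: "length as = length (comp_list le V H)" and il: "i < length (comp_list le V H)"
  shows "\<exists>j \<phi>. j < length (edge_map le V H (a, b) as) \<and>
    (\<forall>x. edge_map le V H (a, b) (as[i := x]) = (edge_map le V H (a, b) as)[j := \<phi> x]) \<and>
    (\<forall>x y. \<phi> (x + y) = \<phi> x + \<phi> y) \<and> (\<forall>r x. \<phi> (sm r x) = sm r (\<phi> x))"
proof -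
  let ?L = "comp_list le V H" and ?L' = "comp_list le V (insert (a, b) H)"
  define g where "g C = as ! pos ?L C" for C
  define G0 where "G0 = g(uu := g ca * g cb)"
  have dL: "distinct ?L" using L_props(2)[OF lo] .
  have dL': "distinct ?L'" using CL(2)[OF fin lo] .
  have sL': "set ?L' = insert uu (components V H - {ca, cb})" using CL(1)[OF fin lo] comps' by simp
  have asm: "as = map g ?L" unfolding g_def by (rule list_as_map[OF dL len])
  have em0: "edge_map le V H (a, b) as = map G0 ?L'" unfolding G0_def asm by (rule edge_map_map[OF lo])
  have upd: "as[i := x] = map (g(?L ! i := x)) ?L" for x unfolding asm by (rule upd_map[OF dL il])
  have emx: "edge_map le V H (a, b) (as[i := x]) = map ((g(?L ! i := x))(uu := (g(?L ! i := x)) ca * (g(?L ! i := x)) cb)) ?L'" for x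
    unfolding upd by (rule edge_map_map[OF lo])
  have Li: "?L ! i \<in> components V H" using nth_mem[OF il] L_props(1)[OF lo] by simp
  have alg1: "sm r (x * y) = sm r x * y" and alg2: "sm r (x * y) = x * sm r y" for r x y
    using alg unfolding is_algebra_def by blast+
  have caL': "ca \<notin> set ?L'" "cb \<notin> set ?L'" using sL' uu_notin ca_in cb_in by auto
  have uL': "uu \<in> set ?L'" using sL' by simp
  have pu: "pos ?L' uu < length ?L'" using pos_in[OF dL' uL'] by simp
  show ?thesis
  proof (cases "?L ! i = ca")
    case True
    have "edge_map le V H (a, b) (as[i := x]) = (edge_map le V H (a, b) as)[pos ?L' uu := x * g cb]" for x
    proof -
      have "map ((g(?L ! i := x))(uu := (g(?L ! i := x)) ca * (g(?L ! i := x)) cb)) ?L' = map (G0(uu := x * g cb)) ?L'"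
        using True ca_ne_cb caL' unfolding G0_def by (intro map_cong) auto
      also have "\<dots> = (map G0 ?L')[pos ?L' uu := x * g cb]" by (rule map_upd_pos[OF dL' uL'])
      finally show ?thesis unfolding emx em0 .
    qed
    moreover have "\<forall>x y. (x + y) * g cb = x * g cb + y * g cb" by (simp add: distrib_right)
    moreover have "\<forall>r x. sm r x * g cb = sm r (x * g cb)" using alg1 by simp
    ultimately show ?thesis using pu em0 by (intro exI[of _ "pos ?L' uu"] exI[of _ "\<lambda>x. x * g cb"]) simp
  next
    case F1: False
    show ?thesis
    proof (cases "?L ! i = cb")
      case True
      have "edge_map le V H (a, b) (as[i := x]) = (edge_map le V H (a, b) as)[pos ?L' uu := g ca * x]" for x
      proof -
        have "map ((g(?L ! i := x))(uu := (g(?L ! i := x)) ca * (g(?L ! i := x)) cb)) ?L' = map (G0(uu := g ca * x)) ?L'"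
          using True ca_ne_cb caL' unfolding G0_def by (intro map_cong) auto
        also have "\<dots> = (map G0 ?L')[pos ?L' uu := g ca * x]" by (rule map_upd_pos[OF dL' uL'])
        finally show ?thesis unfolding emx em0 .
      qed
      moreover have "\<forall>x y. g ca * (x + y) = g ca * x + g ca * y" by (simp add: distrib_left)
      moreover have "\<forall>r x. g ca * sm r x = sm r (g ca * x)" using alg2 by simp
      ultimately show ?thesis using pu em0 by (intro exI[of _ "pos ?L' uu"] exI[of _ "\<lambda>x. g ca * x"]) simp
    next
      case F2: False
      let ?C = "?L ! i"
      have CL': "?C \<in> set ?L'" using sL' Li F1 F2 by simp
      have Cu: "?C \<noteq> uu"
      proof
        assume "?C = uu"
        thus False using Li uu_notin by simp
      qed
      have pC: "pos ?L' ?C < length ?L'" using pos_in[OF dL' CL'] by simp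
      have "edge_map le V H (a, b) (as[i := x]) = (edge_map le V H (a, b) as)[pos ?L' ?C := x]" for x
      proof -
        have "map ((g(?C := x))(uu := (g(?C := x)) ca * (g(?C := x)) cb)) ?L' = map (G0(?C := x)) ?L'"
          using F1 F2 Cu unfolding G0_def by (intro map_cong) auto
        also have "\<dots> = (map G0 ?L')[pos ?L' ?C := x]" by (rule map_upd_pos[OF dL' CL'])
        finally show ?thesis unfolding emx em0 .
      qed
      thus ?thesis using pC em0 by (intro exI[of _ "pos ?L' ?C"] exI[of _ "\<lambda>x. x"]) simp
    qed
  qed
qed

end

lemma dlin_nz:
  assumes "dlin F le V E f (H', bs) \<noteq> 0"
  shows "\<exists>x\<in>F. \<exists>e\<in>E. e \<notin> fst x \<and> is_multipath V E (insert e (fst x)) \<and> H' = insert e (fst x) \<and>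
      bs = edge_map le V (fst x) e (snd x) \<and> f x \<noteq> 0"
proof (rule ccontr)
  assume neg: "\<not> ?thesis"
  have "\<forall>x\<in>F. \<forall>e\<in>E. (if e \<notin> fst x \<and> is_multipath V E (insert e (fst x)) \<and> H' = insert e (fst x) \<and>
      bs = edge_map le V (fst x) e (snd x) then edge_sign le V (fst x) e * f x else 0) = 0"
  proof (intro ballI)
    fix x e assume xe: "x \<in> F" "e \<in> E"
    have "e \<notin> fst x \<and> is_multipath V E (insert e (fst x)) \<and> H' = insert e (fst x) \<and>
      bs = edge_map le V (fst x) e (snd x) \<longrightarrow> f x = 0" using neg xe by blast
    thus "(if e \<notin> fst x \<and> is_multipath V E (insert e (fst x)) \<and> H' = insert e (fst x) \<and>
      bs = edge_map le V (fst x) e (snd x) then edge_sign le V (fst x) e * f x else 0) = 0" by simp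
  qed
  hence "dlin F le V E f (H', bs) = 0" unfolding dlin_def by (simp add: sum.neutral)
  thus False using assms by simp
qed

lemma dfree_Fr:
  assumes dg: "digraph V E" and lo: "linear_order_on V le" and f: "f \<in> Fr V E n"
  shows "dfree le V E f \<in> Fr V E (Suc n)"
proof -
  have fin: "finite V" and EV: "E \<subseteq> V \<times> V" using dg unfolding digraph_def by blast+
  have fE: "finite E" using finite_subset[OF EV] fin by blast
  let ?F = "{y. f y \<noteq> 0}"
  have fF: "finite ?F" using Fr_fin[OF f] .
  have eq: "dfree le V E f = dlin ?F le V E f" by (rule dfree_dlin[OF fF fE]) simp
  have sub: "{y. dlin ?F le V E f y \<noteq> 0} \<subseteq> (\<lambda>(x, e). (insert e (fst x), edge_map le V (fst x) e (snd x))) ` (?F \<times> E)"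
  proof
    fix y assume "y \<in> {y. dlin ?F le V E f y \<noteq> 0}"
    then obtain H' bs where y: "y = (H', bs)" "dlin ?F le V E f (H', bs) \<noteq> 0" by (cases y) auto
    from dlin_nz[OF y(2)] obtain x e where "x \<in> ?F" "e \<in> E" "H' = insert e (fst x)" "bs = edge_map le V (fst x) e (snd x)"
      by blast
    thus "y \<in> (\<lambda>(x, e). (insert e (fst x), edge_map le V (fst x) e (snd x))) ` (?F \<times> E)"
      using y(1) by force
  qed
  show ?thesis unfolding eq
  proof (rule Fr_I)
    show "finite {y. dlin ?F le V E f y \<noteq> 0}" by (rule finite_subset[OF sub]) (use fF fE in simp)
    fix y assume "dlin ?F le V E f y \<noteq> 0"
    then obtain H' bs where y: "y = (H', bs)" "dlin ?F le V E f (H', bs) \<noteq> 0" by (cases y) auto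
    from dlin_nz[OF y(2)] obtain x e where xe: "x \<in> ?F" "e \<in> E" "e \<notin> fst x" "is_multipath V E (insert e (fst x))"
      "H' = insert e (fst x)" "bs = edge_map le V (fst x) e (snd x)" "f x \<noteq> 0" by blast
    obtain H as where x: "x = (H, as)" by (cases x)
    obtain v w where e: "e = (v, w)" by (cases e)
    have g: "gen_ok V E n (H, as)" using Fr_D[OF f xe(7)] x by simp
    have stp: "step V E H v w"
      using step_of[OF dg _ xe(2)[unfolded e] xe(3)[unfolded x e, simplified] xe(4)[unfolded x e, simplified]] g
      unfolding gen_ok_def by simp
    show "gen_ok V E (Suc n) y" using step.gen_ok_step[OF stp lo g] xe(5,6) y(1) x e by simp
  qed
qed

lemma dfree_Nrel':
  fixes sm :: "'r::{comm_ring,monoid_mult} \<Rightarrow> 'a::{ring,monoid_mult} \<Rightarrow> 'a"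
    and h :: "('v \<times> 'v) set \<times> 'a list \<Rightarrow> 'r" and V :: "'v set"
  assumes dg: "digraph V E" and lo: "linear_order_on V le" and alg: "is_algebra sm"
    and fin: "finite V" and fE: "finite E"
  shows "h \<in> Nrel sm V E n \<Longrightarrow> dfree le V E h \<in> Nrel sm V E (Suc n)"
proof (induction rule: Nrel.induct)
    case (gen_add H as i a b)
    define d where "d c = (delta (H, as[i := c]) :: _ \<Rightarrow> 'r)" for c
    define valid where "valid e \<longleftrightarrow> e \<notin> H \<and> is_multipath V E (insert e H)" for e
    define G where "G e = (\<lambda>y. if valid e then (edge_sign le V H e :: 'r) *
        (delta (insert e H, edge_map le V H e (as[i := a + b])) y - delta (insert e H, edge_map le V H e (as[i := a])) y
         - delta (insert e H, edge_map le V H e (as[i := b])) y) else 0)" for e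
    have sd: "finite {y. d c y \<noteq> 0}" for c unfolding d_def by (rule supp_delta)
    have sdd: "finite {y. d (a + b) y - d a y \<noteq> 0}"
      by (rule finite_subset[OF supp_diff]) (use sd in simp)
    have "dfree le V E (\<lambda>y. d (a + b) y - d a y - d b y) =
        (\<lambda>y. dfree le V E (\<lambda>y. d (a + b) y - d a y) y - dfree le V E (d b) y)"
      by (rule dfree_diff[OF sdd sd fE])
    also have "\<dots> = (\<lambda>y. dfree le V E (d (a + b)) y - dfree le V E (d a) y - dfree le V E (d b) y)"
      unfolding dfree_diff[OF sd sd fE] ..
    also have "\<dots> = (\<lambda>y. \<Sum>e\<in>E. G e y)"
      unfolding d_def dfree_delta[OF fE] dsum_def G_def valid_def
      by (intro ext) (auto simp: sum_subtractf[symmetric] right_diff_distrib intro!: sum.cong)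
    finally have eq: "dfree le V E (\<lambda>y. d (a + b) y - d a y - d b y) = (\<lambda>y. \<Sum>e\<in>E. G e y)" .
    have "G e \<in> Nrel sm V E (Suc n)" if eE: "e \<in> E" for e
    proof (cases "valid e")
      case False thus ?thesis unfolding G_def using Nrel.zero by simp
    next
      case True
      obtain v w where e: "e = (v, w)" by (cases e)
      have stp: "step V E H v w"
        using step_of[OF dg _ eE[unfolded e]] True gen_add.hyps(1) unfolding valid_def gen_ok_def e by simp
      have len: "length as = length (comp_list le V H)" using gen_add.hyps(1) len_CL[OF fin lo] unfolding gen_ok_def by simp
      have il: "i < length (comp_list le V H)" using gen_add.hyps(2) len by simp
      obtain j \<phi> where j: "j < length (edge_map le V H (v, w) as)"
        and up: "\<And>x. edge_map le V H (v, w) (as[i := x]) = (edge_map le V H (v, w) as)[j := \<phi> x]"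
        and ad: "\<And>x y. \<phi> (x + y) = \<phi> x + \<phi> y"
        using step.em_upd[OF stp lo alg len il] by blast
      have g': "gen_ok V E (Suc n) (insert (v, w) H, edge_map le V H (v, w) as)"
        by (rule step.gen_ok_step[OF stp lo gen_add.hyps(1)])
      have "G e = (\<lambda>y. edge_sign le V H e * (delta (insert (v, w) H, (edge_map le V H (v, w) as)[j := \<phi> a + \<phi> b]) y
          - delta (insert (v, w) H, (edge_map le V H (v, w) as)[j := \<phi> a]) y
          - delta (insert (v, w) H, (edge_map le V H (v, w) as)[j := \<phi> b]) y))"
        unfolding G_def using True e up ad by simp
      thus ?thesis using Nrel.smult[OF Nrel.gen_add[OF g' j]] by simp
    qed
    hence "(\<lambda>y. \<Sum>e\<in>E. G e y) \<in> Nrel sm V E (Suc n)" by (intro Nrel_sum[OF fE])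
    thus ?case using eq unfolding d_def by simp
  next
    case (gen_smult H as i r a)
    define d where "d c = (delta (H, as[i := c]) :: _ \<Rightarrow> 'r)" for c
    define valid where "valid e \<longleftrightarrow> e \<notin> H \<and> is_multipath V E (insert e H)" for e
    define G where "G e = (\<lambda>y. if valid e then (edge_sign le V H e :: 'r) *
        (delta (insert e H, edge_map le V H e (as[i := sm r a])) y - r * delta (insert e H, edge_map le V H e (as[i := a])) y)
         else 0)" for e
    have sd: "finite {y. d c y \<noteq> 0}" for c unfolding d_def by (rule supp_delta)
    have srd: "finite {y. r * d a y \<noteq> 0}"
      by (rule finite_subset[OF supp_smult]) (use sd in simp)
    have "dfree le V E (\<lambda>y. d (sm r a) y - r * d a y) =
        (\<lambda>y. dfree le V E (d (sm r a)) y - dfree le V E (\<lambda>y. r * d a y) y)"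
      by (rule dfree_diff[OF sd srd fE])
    also have "\<dots> = (\<lambda>y. dfree le V E (d (sm r a)) y - r * dfree le V E (d a) y)"
      unfolding dfree_smult[OF sd fE] ..
    also have "\<dots> = (\<lambda>y. \<Sum>e\<in>E. G e y)"
      unfolding d_def dfree_delta[OF fE] dsum_def G_def valid_def
      by (intro ext) (auto simp: sum_subtractf[symmetric] sum_distrib_left right_diff_distrib mult.left_commute intro!: sum.cong)
    finally have eq: "dfree le V E (\<lambda>y. d (sm r a) y - r * d a y) = (\<lambda>y. \<Sum>e\<in>E. G e y)" .
    have "G e \<in> Nrel sm V E (Suc n)" if eE: "e \<in> E" for e
    proof (cases "valid e")
      case False thus ?thesis unfolding G_def using Nrel.zero by simp
    next
      case True
      obtain v w where e: "e = (v, w)" by (cases e)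
      have stp: "step V E H v w"
        using step_of[OF dg _ eE[unfolded e]] True gen_smult.hyps(1) unfolding valid_def gen_ok_def e by simp
      have len: "length as = length (comp_list le V H)" using gen_smult.hyps(1) len_CL[OF fin lo] unfolding gen_ok_def by simp
      have il: "i < length (comp_list le V H)" using gen_smult.hyps(2) len by simp
      obtain j \<phi> where j: "j < length (edge_map le V H (v, w) as)"
        and up: "\<And>x. edge_map le V H (v, w) (as[i := x]) = (edge_map le V H (v, w) as)[j := \<phi> x]"
        and sc: "\<And>r x. \<phi> (sm r x) = sm r (\<phi> x)"
        using step.em_upd[OF stp lo alg len il] by blast
      have g': "gen_ok V E (Suc n) (insert (v, w) H, edge_map le V H (v, w) as)"
        by (rule step.gen_ok_step[OF stp lo gen_smult.hyps(1)])
      have "G e = (\<lambda>y. edge_sign le V H e * (delta (insert (v, w) H, (edge_map le V H (v, w) as)[j := sm r (\<phi> a)]) y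
          - r * delta (insert (v, w) H, (edge_map le V H (v, w) as)[j := \<phi> a]) y))"
        unfolding G_def using True e up sc by simp
      thus ?thesis using Nrel.smult[OF Nrel.gen_smult[OF g' j]] by simp
    qed
    hence "(\<lambda>y. \<Sum>e\<in>E. G e y) \<in> Nrel sm V E (Suc n)" by (intro Nrel_sum[OF fE])
    thus ?case using eq unfolding d_def by simp
  next
    case zero show ?case unfolding dfree_zero by (rule Nrel.zero)
  next
    case (add f g)
    have "dfree le V E (\<lambda>y. f y + g y) = (\<lambda>y. dfree le V E f y + dfree le V E g y)"
      by (rule dfree_add[OF Fr_fin[OF Nrel_Fr[OF add.hyps(1)]] Fr_fin[OF Nrel_Fr[OF add.hyps(2)]] fE])
    thus ?case using Nrel.add[OF add.IH] by simp
  next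
    case (smult f r)
    have "dfree le V E (\<lambda>y. r * f y) = (\<lambda>y. r * dfree le V E f y)"
      by (rule dfree_smult[OF Fr_fin[OF Nrel_Fr[OF smult.hyps(1)]] fE])
    thus ?case using Nrel.smult[OF smult.IH] by simp
qed

lemma dfree_Nrel:
  assumes dg: "digraph V E" and lo: "linear_order_on V le" and alg: "is_algebra sm"
    and h: "h \<in> Nrel sm V E n"
  shows "dfree le V E h \<in> Nrel sm V E (Suc n)"
proof -
  have fin: "finite V" and EV: "E \<subseteq> V \<times> V" using dg unfolding digraph_def by blast+
  have fE: "finite E" using finite_subset[OF EV] fin by blast
  show ?thesis by (rule dfree_Nrel'[OF dg lo alg fin fE h])
qed

lemma Fr_add: "f \<in> Fr V E n \<Longrightarrow> g \<in> Fr V E n \<Longrightarrow> (\<lambda>y. f y + g y) \<in> Fr V E n"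
proof (rule Fr_I)
  assume f: "f \<in> Fr V E n" and g: "g \<in> Fr V E n"
  show "finite {y. f y + g y \<noteq> 0}" by (rule finite_subset[OF supp_add]) (use Fr_fin[OF f] Fr_fin[OF g] in simp)
  fix y assume "f y + g y \<noteq> 0"
  hence "f y \<noteq> 0 \<or> g y \<noteq> 0" by auto
  thus "gen_ok V E n y" using Fr_D[OF f] Fr_D[OF g] by blast
qed

lemma Fr_smult: "f \<in> Fr V E n \<Longrightarrow> (\<lambda>y. r * f y) \<in> Fr V E n"
proof (rule Fr_I)
  assume f: "f \<in> Fr V E n"
  show "finite {y. r * f y \<noteq> 0}" by (rule finite_subset[OF supp_smult]) (use Fr_fin[OF f] in simp)
  fix y assume "r * f y \<noteq> 0"
  hence "f y \<noteq> 0" by auto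
  thus "gen_ok V E n y" using Fr_D[OF f] by blast
qed

lemma Nrel_zero_diff: "(\<lambda>y. f y - f y) \<in> Nrel sm V E n"
  using Nrel.zero by simp

lemma cls_mem: "f \<in> Fr V E n \<Longrightarrow> f \<in> cls sm V E n f"
  unfolding cls_def using Nrel_zero_diff by blast

lemma cls_eq:
  assumes "(\<lambda>y. f y - g y) \<in> Nrel sm V E n"
  shows "cls sm V E n f = cls sm V E n g"
proof (rule set_eqI, rule iffI)
  fix h assume "h \<in> cls sm V E n f"
  hence h: "h \<in> Fr V E n" "(\<lambda>y. f y - h y) \<in> Nrel sm V E n" unfolding cls_def by auto
  have "(\<lambda>y. (f y - h y) - (f y - g y)) \<in> Nrel sm V E n" by (rule Nrel_diff[OF h(2) assms])
  thus "h \<in> cls sm V E n g" using h(1) unfolding cls_def by simp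
next
  fix h assume "h \<in> cls sm V E n g"
  hence h: "h \<in> Fr V E n" "(\<lambda>y. g y - h y) \<in> Nrel sm V E n" unfolding cls_def by auto
  have "(\<lambda>y. (f y - g y) + (g y - h y)) \<in> Nrel sm V E n" by (rule Nrel.add[OF assms h(2)])
  thus "h \<in> cls sm V E n f" using h(1) unfolding cls_def by simp
qed

lemma cls_sub: "cls sm V E n f \<subseteq> Fr V E n" unfolding cls_def by blast

lemma Cq_rep:
  assumes "X \<in> Cq sm V E n"
  shows "rep X \<in> X" "X = cls sm V E n (rep X)" "rep X \<in> Fr V E n"
proof -
  obtain f where f: "f \<in> Fr V E n" "X = cls sm V E n f" using assms unfolding Cq_def by blast
  have "f \<in> X" using cls_mem[OF f(1)] f(2) by simp
  thus rX: "rep X \<in> X" unfolding rep_def by (rule someI[where P = "\<lambda>f. f \<in> X"])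
  hence "(\<lambda>y. f y - rep X y) \<in> Nrel sm V E n" using f(2) unfolding cls_def by simp
  thus "X = cls sm V E n (rep X)" using f(2) cls_eq by blast
  show "rep X \<in> Fr V E n" using rX f(2) cls_sub by blast
qed

lemma rep_cls:
  assumes "f \<in> Fr V E n"
  shows "(\<lambda>y. f y - rep (cls sm V E n f) y) \<in> Nrel sm V E n"
proof -
  have "cls sm V E n f \<in> Cq sm V E n" using assms unfolding Cq_def by blast
  hence "rep (cls sm V E n f) \<in> cls sm V E n f" by (rule Cq_rep(1))
  thus ?thesis unfolding cls_def by simp
qed

context
  fixes V :: "'v set" and E :: "('v \<times> 'v) set"
    and sm :: "'r::{comm_ring,monoid_mult} \<Rightarrow> 'a::{ring,monoid_mult} \<Rightarrow> 'a"
    and le1 le2 :: "'v rel"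
  assumes dg: "digraph V E" and alg: "is_algebra sm"
    and lo1: "linear_order_on V le1" and lo2: "linear_order_on V le2"
begin

lemma fin: "finite V" using dg unfolding digraph_def by blast
lemma fE: "finite E"
proof -
  have "E \<subseteq> V \<times> V" using dg unfolding digraph_def by blast
  thus ?thesis using finite_subset fin by blast
qed

lemma Tm_cls:
  fixes f :: "('v \<times> 'v) set \<times> 'a list \<Rightarrow> 'r"
  assumes f: "f \<in> Fr V E n"
  shows "Tm le1 le2 V ` cls sm V E n f = cls sm V E n (Tm le1 le2 V f)"
proof (rule set_eqI, rule iffI)
  fix h assume "h \<in> Tm le1 le2 V ` cls sm V E n f"
  then obtain g where g: "g \<in> cls sm V E n f" "h = Tm le1 le2 V g" by blast
  have gF: "g \<in> Fr V E n" "(\<lambda>y. f y - g y) \<in> Nrel sm V E n" using g(1) unfolding cls_def by auto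
  have "Tm le1 le2 V (\<lambda>y. f y - g y) \<in> Nrel sm V E n" by (rule Tm_Nrel[OF fin lo1 lo2 gF(2)])
  hence "(\<lambda>y. Tm le1 le2 V f y - Tm le1 le2 V g y) \<in> Nrel sm V E n" unfolding Tm_diff .
  moreover have "Tm le1 le2 V g \<in> Fr V E n" by (rule Tm_Fr[OF fin lo1 lo2 gF(1)])
  ultimately show "h \<in> cls sm V E n (Tm le1 le2 V f)" unfolding cls_def g(2) by simp
next
  fix h assume "h \<in> cls sm V E n (Tm le1 le2 V f)"
  hence hF: "h \<in> Fr V E n" "(\<lambda>y. Tm le1 le2 V f y - h y) \<in> Nrel sm V E n" unfolding cls_def by auto
  have hh: "Tm le1 le2 V (Tm le2 le1 V h) = h" by (rule Tm_Tm[OF fin lo2 lo1 hF(1)])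
  have ff: "Tm le2 le1 V (Tm le1 le2 V f) = f" by (rule Tm_Tm[OF fin lo1 lo2 f])
  have "Tm le2 le1 V (\<lambda>y. Tm le1 le2 V f y - h y) \<in> Nrel sm V E n" by (rule Tm_Nrel[OF fin lo2 lo1 hF(2)])
  hence "(\<lambda>y. f y - Tm le2 le1 V h y) \<in> Nrel sm V E n" unfolding Tm_diff ff .
  moreover have "Tm le2 le1 V h \<in> Fr V E n" by (rule Tm_Fr[OF fin lo2 lo1 hF(1)])
  ultimately have "Tm le2 le1 V h \<in> cls sm V E n f" unfolding cls_def by simp
  thus "h \<in> Tm le1 le2 V ` cls sm V E n f" using hh by (metis image_eqI)
qed

lemma phi_Cq:
  assumes X: "X \<in> Cq sm V E n"
  shows "Tm le1 le2 V ` X \<in> Cq sm V E n" "Tm le1 le2 V ` X = cls sm V E n (Tm le1 le2 V (rep X))"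
proof -
  show e: "Tm le1 le2 V ` X = cls sm V E n (Tm le1 le2 V (rep X))"
    using Tm_cls[OF Cq_rep(3)[OF X]] Cq_rep(2)[OF X] by simp
  show "Tm le1 le2 V ` X \<in> Cq sm V E n" unfolding e Cq_def using Tm_Fr[OF fin lo1 lo2 Cq_rep(3)[OF X]] by blast
qed

lemma rep_phi:
  assumes X: "X \<in> Cq sm V E n"
  shows "(\<lambda>y. Tm le1 le2 V (rep X) y - rep (Tm le1 le2 V ` X) y) \<in> Nrel sm V E n"
    "rep (Tm le1 le2 V ` X) \<in> Fr V E n"
proof -
  have "rep (Tm le1 le2 V ` X) \<in> Tm le1 le2 V ` X" by (rule Cq_rep(1)[OF phi_Cq(1)[OF X]])
  thus "(\<lambda>y. Tm le1 le2 V (rep X) y - rep (Tm le1 le2 V ` X) y) \<in> Nrel sm V E n"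
    "rep (Tm le1 le2 V ` X) \<in> Fr V E n" unfolding phi_Cq(2)[OF X] cls_def by auto
qed

end

theorem proposition4p11:
  fixes V :: "'v set" and E :: "('v \<times> 'v) set"
    and sm :: "'r::{comm_ring,monoid_mult} \<Rightarrow> 'a::{ring,monoid_mult} \<Rightarrow> 'a"
    and le1 le2 :: "'v rel"
  assumes "digraph V E"
    and "is_algebra sm"
    and "linear_order_on V le1"
    and "linear_order_on V le2"
  shows "cochain_iso sm V E le1 le2"
proof -
  note dg = assms(1) and alg = assms(2) and lo1 = assms(3) and lo2 = assms(4)
  have fin: "finite V" using dg unfolding digraph_def by blast
  have fE: "finite E" using fE[OF dg alg lo1 lo2] .
  define \<phi> where "\<phi> = (\<lambda>(n::nat) (X :: (('v \<times> 'v) set \<times> 'a list \<Rightarrow> 'r) set). Tm le1 le2 V ` X)"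
  have "\<forall>n. bij_betw (\<phi> n) (Cq sm V E n) (Cq sm V E n) \<and>
       (\<forall>X \<in> Cq sm V E n. \<forall>Y \<in> Cq sm V E n.
          \<phi> n (qadd sm V E n X Y) = qadd sm V E n (\<phi> n X) (\<phi> n Y)) \<and>
       (\<forall>r. \<forall>X \<in> Cq sm V E n. \<phi> n (qsmult sm V E n r X) = qsmult sm V E n r (\<phi> n X)) \<and>
       (\<forall>X \<in> Cq sm V E n. \<phi> (Suc n) (qd sm le1 V E n X) = qd sm le2 V E n (\<phi> n X))"
  proof (intro allI conjI ballI)
    fix n
    show "bij_betw (\<phi> n) (Cq sm V E n) (Cq sm V E n)"
    proof (rule bij_betw_byWitness[where f' = "\<lambda>Y. Tm le2 le1 V ` Y"])
      show "\<forall>a\<in>Cq sm V E n. Tm le2 le1 V ` \<phi> n a = a"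
      proof
        fix X assume X: "X \<in> Cq sm V E n"
        have sub: "X \<subseteq> Fr V E n" using Cq_rep(2)[OF X] cls_sub by metis
        have "Tm le2 le1 V ` Tm le1 le2 V ` X = (\<lambda>f. Tm le2 le1 V (Tm le1 le2 V f)) ` X" by (simp add: image_image)
        also have "\<dots> = (\<lambda>f. f) ` X"
        proof (rule image_cong[OF refl])
          fix f assume "f \<in> X"
          hence "f \<in> Fr V E n" using sub by blast
          thus "Tm le2 le1 V (Tm le1 le2 V f) = f" by (rule Tm_Tm[OF fin lo1 lo2])
        qed
        also have "\<dots> = X" by simp
        finally show "Tm le2 le1 V ` \<phi> n X = X" unfolding \<phi>_def by simp
      qed
      show "\<forall>a\<in>Cq sm V E n. \<phi> n (Tm le2 le1 V ` a) = a"
      proof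
        fix X assume X: "X \<in> Cq sm V E n"
        have sub: "X \<subseteq> Fr V E n" using Cq_rep(2)[OF X] cls_sub by metis
        have "Tm le1 le2 V ` Tm le2 le1 V ` X = (\<lambda>f. Tm le1 le2 V (Tm le2 le1 V f)) ` X" by (simp add: image_image)
        also have "\<dots> = (\<lambda>f. f) ` X"
        proof (rule image_cong[OF refl])
          fix f assume "f \<in> X"
          hence "f \<in> Fr V E n" using sub by blast
          thus "Tm le1 le2 V (Tm le2 le1 V f) = f" by (rule Tm_Tm[OF fin lo2 lo1])
        qed
        also have "\<dots> = X" by simp
        finally show "\<phi> n (Tm le2 le1 V ` X) = X" unfolding \<phi>_def by simp
      qed
      show "\<phi> n ` Cq sm V E n \<subseteq> Cq sm V E n" unfolding \<phi>_def using phi_Cq(1)[OF dg alg lo1 lo2] by blast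
      show "(\<lambda>Y. Tm le2 le1 V ` Y) ` Cq sm V E n \<subseteq> Cq sm V E n" using phi_Cq(1)[OF dg alg lo2 lo1] by blast
    qed
  next
    fix n X Y assume X: "X \<in> Cq sm V E n" and Y: "Y \<in> Cq sm V E n"
    have rX: "rep X \<in> Fr V E n" and rY: "rep Y \<in> Fr V E n" using Cq_rep(3) X Y by blast+
    have "\<phi> n (qadd sm V E n X Y) = cls sm V E n (Tm le1 le2 V (\<lambda>y. rep X y + rep Y y))"
      unfolding \<phi>_def qadd_def using Tm_cls[OF dg alg lo1 lo2 Fr_add[OF rX rY]] by simp
    also have "\<dots> = cls sm V E n (\<lambda>y. Tm le1 le2 V (rep X) y + Tm le1 le2 V (rep Y) y)" unfolding Tm_add ..
    also have "\<dots> = qadd sm V E n (\<phi> n X) (\<phi> n Y)" unfolding qadd_def \<phi>_def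
    proof (rule cls_eq)
      have "(\<lambda>y. (Tm le1 le2 V (rep X) y - rep (Tm le1 le2 V ` X) y) + (Tm le1 le2 V (rep Y) y - rep (Tm le1 le2 V ` Y) y))
          \<in> Nrel sm V E n"
        by (rule Nrel.add[OF rep_phi(1)[OF dg alg lo1 lo2 X] rep_phi(1)[OF dg alg lo1 lo2 Y]])
      thus "(\<lambda>y. (Tm le1 le2 V (rep X) y + Tm le1 le2 V (rep Y) y) - (rep (Tm le1 le2 V ` X) y + rep (Tm le1 le2 V ` Y) y))
          \<in> Nrel sm V E n" by (simp add: algebra_simps)
    qed
    finally show "\<phi> n (qadd sm V E n X Y) = qadd sm V E n (\<phi> n X) (\<phi> n Y)" .
  next
    fix n r X assume X: "X \<in> Cq sm V E n"
    have rX: "rep X \<in> Fr V E n" using Cq_rep(3) X by blast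
    have "\<phi> n (qsmult sm V E n r X) = cls sm V E n (Tm le1 le2 V (\<lambda>y. r * rep X y))"
      unfolding \<phi>_def qsmult_def using Tm_cls[OF dg alg lo1 lo2 Fr_smult[OF rX]] by simp
    also have "\<dots> = cls sm V E n (\<lambda>y. r * Tm le1 le2 V (rep X) y)" unfolding Tm_smult ..
    also have "\<dots> = qsmult sm V E n r (\<phi> n X)" unfolding qsmult_def \<phi>_def
    proof (rule cls_eq)
      have "(\<lambda>y. r * (Tm le1 le2 V (rep X) y - rep (Tm le1 le2 V ` X) y)) \<in> Nrel sm V E n"
        by (rule Nrel.smult[OF rep_phi(1)[OF dg alg lo1 lo2 X]])
      thus "(\<lambda>y. r * Tm le1 le2 V (rep X) y - r * rep (Tm le1 le2 V ` X) y) \<in> Nrel sm V E n"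
        by (simp add: algebra_simps)
    qed
    finally show "\<phi> n (qsmult sm V E n r X) = qsmult sm V E n r (\<phi> n X)" .
  next
    fix n X assume X: "X \<in> Cq sm V E n"
    have rX: "rep X \<in> Fr V E n" using Cq_rep(3) X by blast
    have dF: "dfree le1 V E (rep X) \<in> Fr V E (Suc n)" by (rule dfree_Fr[OF dg lo1 rX])
    have "\<phi> (Suc n) (qd sm le1 V E n X) = cls sm V E (Suc n) (Tm le1 le2 V (dfree le1 V E (rep X)))"
      unfolding \<phi>_def qd_def using Tm_cls[OF dg alg lo1 lo2 dF] by simp
    also have "\<dots> = cls sm V E (Suc n) (dfree le2 V E (Tm le1 le2 V (rep X)))"
      unfolding main_id[OF dg lo1 lo2 rX] ..
    also have "\<dots> = qd sm le2 V E n (\<phi> n X)" unfolding qd_def \<phi>_def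
    proof (rule cls_eq)
      have TF: "Tm le1 le2 V (rep X) \<in> Fr V E n" by (rule Tm_Fr[OF fin lo1 lo2 rX])
      have pF: "rep (Tm le1 le2 V ` X) \<in> Fr V E n" by (rule rep_phi(2)[OF dg alg lo1 lo2 X])
      have "dfree le2 V E (\<lambda>y. Tm le1 le2 V (rep X) y - rep (Tm le1 le2 V ` X) y) \<in> Nrel sm V E (Suc n)"
        by (rule dfree_Nrel[OF dg lo2 alg rep_phi(1)[OF dg alg lo1 lo2 X]])
      thus "(\<lambda>y. dfree le2 V E (Tm le1 le2 V (rep X)) y - dfree le2 V E (rep (Tm le1 le2 V ` X)) y) \<in> Nrel sm V E (Suc n)"
        unfolding dfree_diff[OF Fr_fin[OF TF] Fr_fin[OF pF] fE] .
    qed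
    finally show "\<phi> (Suc n) (qd sm le1 V E n X) = qd sm le2 V E n (\<phi> n X)" .
  qed
  thus ?thesis unfolding cochain_iso_def by blast
qed


end
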